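(* Let $(\Omega,\Sigma,P)$ be an atomless probability space with a filtration $\mathcal{F}=\{\mathcal{F}_n\}_{n\ge 0}$ such that each $\mathcal{F}_n$ is generated by an at most countable family $\mathcal{A}(\mathcal{F}_n)$ of atoms and $\bigcup_n\mathcal{F}_n$ generates $\Sigma$. Let $\alpha\in(0,1)$, $1<p<q<\infty$, $\frac1p-\frac1q=\alpha$. Define $$b_n=\sum_{w\in\mathcal{A}(\mathcal{F}_n)}P(w)\chi_w,\qquad \tilde b_n(x)=\inf\{b_n(y): y\in\omega\}\ \text{ for } x\in\omega\in\mathcal{A}(\mathcal{F}_{n-1}),$$ and for a random variable $F$ with martingale $F_n=\mathbb{E}(F\mid\mathcal{F}_n)$ and differences $\Delta F_n=F_n-F_{n-1}$ ($n\ge1$) put $$\tilde{I}_\alpha[F]=\sum_{n=1}^\infty \tilde b_n^{\alpha}\,\Delta F_n,\qquad I^{\mathcal{A}}_\alpha[F]=\sum_{n=1}^\infty b_n^{\alpha}\,\Delta F_n.$$ Then both operators $\tilde I_\alpha$ and $I^{\mathcal{A}}_\alpha$ map $L_p$ to $L_q$ continuously: there is a constant $C$ (independent of $F$) such that $\|\tilde I_\alpha[F]\|_{L_q}\le C\|F\|_{L_p}$ and $\|I^{\mathcal{A}}_\alpha[F]\|_{L_q}\le C\|F\|_{L_p}$ for all $F\in L_p$.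
   Context: A simple function is a random variable that is $\mathcal{F}_N$-measurable for some $N$; for such $F$ the sums above are finite. The operators are considered as linear maps between function spaces: the inequality is established for simple functions and the operators are extended to $L_p$ by density (equivalently, the series converge almost surely for $F\in L_p$ and the bounds hold). *)

theory Defs
  imports "HOL-Probability.Probability"
begin

definition is_atom :: "'a measure \<Rightarrow> 'a measure \<Rightarrow> 'a set \<Rightarrow> bool" where
  "is_atom M G B \<longleftrightarrow> B \<in> sets G \<and> measure M B > 0 \<and>
     (\<forall>C\<in>sets G. C \<subseteq> B \<longrightarrow> measure M C = 0 \<or> measure M C = measure M B)"

definition atomless :: "'a measure \<Rightarrow> bool" where
  "atomless M \<longleftrightarrow> (\<forall>A\<in>sets M. measure M A > 0 \<longrightarrow>
     (\<exists>B\<in>sets M. B \<subseteq> A \<and> 0 < measure M B \<and> measure M B < measure M A))"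

definition bfun :: "'a measure \<Rightarrow> (nat \<Rightarrow> 'a set set) \<Rightarrow> nat \<Rightarrow> 'a \<Rightarrow> real" where
  "bfun M A n x = infsum (\<lambda>w. measure M w * indicator w x) (A n)"

definition btilde :: "'a measure \<Rightarrow> (nat \<Rightarrow> 'a set set) \<Rightarrow> nat \<Rightarrow> 'a \<Rightarrow> real" where
  "btilde M A n x = infsum (\<lambda>\<omega>. indicator \<omega> x * (INF y\<in>\<omega>. bfun M A n y)) (A (n - 1))"

definition mdiff :: "'a measure \<Rightarrow> (nat \<Rightarrow> 'a measure) \<Rightarrow> ('a \<Rightarrow> real) \<Rightarrow> nat \<Rightarrow> 'a \<Rightarrow> real" where
  "mdiff M F G n x = real_cond_exp M (F n) G x - real_cond_exp M (F (n - 1)) G x"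

text \<open>The operators on a simple function G that is F_N-measurable
  (all terms with n > N vanish a.e., so the series is the finite sum up to N).\<close>
definition I_tilde :: "'a measure \<Rightarrow> (nat \<Rightarrow> 'a measure) \<Rightarrow> (nat \<Rightarrow> 'a set set) \<Rightarrow> real \<Rightarrow> nat
    \<Rightarrow> ('a \<Rightarrow> real) \<Rightarrow> 'a \<Rightarrow> real" where
  "I_tilde M F A \<alpha> N G x = (\<Sum>n\<in>{1..N}. btilde M A n x powr \<alpha> * mdiff M F G n x)"

definition I_A :: "'a measure \<Rightarrow> (nat \<Rightarrow> 'a measure) \<Rightarrow> (nat \<Rightarrow> 'a set set) \<Rightarrow> real \<Rightarrow> nat
    \<Rightarrow> ('a \<Rightarrow> real) \<Rightarrow> 'a \<Rightarrow> real" where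
  "I_A M F A \<alpha> N G x = (\<Sum>n\<in>{1..N}. bfun M A n x powr \<alpha> * mdiff M F G n x)"

text \<open>L_r norm of a real function (meaningful when |G|^r is integrable).\<close>
definition Lnorm :: "'a measure \<Rightarrow> real \<Rightarrow> ('a \<Rightarrow> real) \<Rightarrow> real" where
  "Lnorm M r G = (integral\<^sup>L M (\<lambda>x. \<bar>G x\<bar> powr r)) powr (1 / r)"

end

theory Submission
  imports Defs
begin

lemma bern_concave:
  fixes x g :: real assumes "0 < x" "0 \<le> g" "g \<le> 1"
  shows "x powr g \<le> 1 + g * (x - 1)"
  using Youngs_inequality_0[of g "1 - g" x 1] assms by (simp add: algebra_simps)

lemma bern_convex_neg:
  fixes x g :: real assumes "0 < x" "g \<le> 0"
  shows "1 + g * (x - 1) \<le> x powr g"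
proof -
  define \<beta> where "\<beta> = 1 / (1 - g)"
  have b0: "0 < \<beta>" "\<beta> \<le> 1" using assms by (auto simp: \<beta>_def field_simps)
  have "(x powr g) powr \<beta> * x powr (1 - \<beta>) \<le> \<beta> * x powr g + (1 - \<beta>) * x"
    using Youngs_inequality_0[of \<beta> "1 - \<beta>" "x powr g" x] b0 assms by simp
  moreover have "(x powr g) powr \<beta> * x powr (1 - \<beta>) = 1"
  proof -
    have "(x powr g) powr \<beta> * x powr (1 - \<beta>) = x powr (g * \<beta> + (1 - \<beta>))"
      by (simp add: powr_powr powr_add)
    also have "g * \<beta> + (1 - \<beta>) = 0" using assms by (simp add: \<beta>_def field_simps)
    finally show ?thesis using assms by simp
  qed
  ultimately have "1 \<le> \<beta> * x powr g + (1 - \<beta>) * x" by simp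
  then have "(1 - g) * 1 \<le> (1 - g) * (\<beta> * x powr g + (1 - \<beta>) * x)"
    using assms by (intro mult_left_mono) auto
  moreover have "(1 - g) * (\<beta> * x powr g + (1 - \<beta>) * x) = x powr g - g * x"
  proof -
    have h1: "(1 - g) * \<beta> = 1" using assms by (simp add: \<beta>_def)
    have h2: "(1 - g) * (1 - \<beta>) = - g" using h1 by (simp add: algebra_simps)
    have "(1 - g) * (\<beta> * x powr g + (1 - \<beta>) * x) = ((1 - g) * \<beta>) * x powr g + ((1 - g) * (1 - \<beta>)) * x"
      by (simp add: algebra_simps)
    then show ?thesis using h1 h2 by simp
  qed
  ultimately show ?thesis by (simp add: algebra_simps)
qed

lemma I1:
  fixes a b b' :: real assumes "0 < b" "b \<le> b'" "0 < a" "a \<le> 1"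
  shows "a * b' powr (a - 1) * (b' - b) \<le> b' powr a - b powr a"
proof -
  have bp: "0 < b'" using assms by simp
  define r where "r = b / b'"
  have r: "0 < r" using assms bp by (simp add: r_def)
  have "b = r * b'" using bp by (simp add: r_def)
  then have "b powr a = r powr a * b' powr a" using r bp by (simp add: powr_mult)
  also have "\<dots> \<le> (1 + a * (r - 1)) * b' powr a"
    using bern_concave[OF r, of a] assms by (intro mult_right_mono) auto
  also have "\<dots> = b' powr a - a * b' powr (a - 1) * (b' - b)"
    using bp by (simp add: r_def powr_diff field_simps)
  finally show ?thesis by simp
qed

lemma I2:
  fixes q b b' :: real assumes "0 < b" "b \<le> b'" "1 \<le> q"
  shows "b powr (-1/q) * (1 - b / b') \<le> q * (b powr (-1/q) - b' powr (-1/q))"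
proof -
  have bp: "0 < b'" using assms by simp
  define r where "r = b / b'"
  have r: "0 < r" using assms bp by (simp add: r_def)
  have "b' powr (-1/q) = (b / r) powr (-1/q)" using bp assms by (simp add: r_def)
  also have "\<dots> = b powr (-1/q) / r powr (-1/q)" using r assms by (simp add: powr_divide)
  also have "\<dots> = b powr (-1/q) * r powr (1/q)" by (simp add: powr_minus_divide)
  finally have "b' powr (-1/q) = b powr (-1/q) * r powr (1/q)" .
  moreover have "r powr (1/q) \<le> 1 + (1/q) * (r - 1)"
    using bern_concave[OF r, of "1/q"] assms by simp
  ultimately have "q * (b powr (-1/q) - b' powr (-1/q)) \<ge> q * (b powr (-1/q) - b powr (-1/q) * (1 + (1/q) * (r - 1)))"
    using assms by (intro mult_left_mono) (auto intro!: mult_left_mono)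
  moreover have "q * (b powr (-1/q) - b powr (-1/q) * (1 + (1/q) * (r - 1))) = b powr (-1/q) * (1 - r)"
    using assms by (simp add: field_simps)
  ultimately show ?thesis by (simp add: r_def)
qed

lemma I3:
  fixes s b b' :: real assumes "0 < b" "b \<le> b'" "0 < s"
  shows "s * b' powr (-s - 1) * (b' - b) \<le> b powr (-s) - b' powr (-s)"
proof -
  have bp: "0 < b'" using assms by simp
  define r where "r = b / b'"
  have r: "0 < r" using assms bp by (simp add: r_def)
  have "b = r * b'" using bp by (simp add: r_def)
  then have "b powr (-s) = r powr (-s) * b' powr (-s)" using r bp by (simp add: powr_mult)
  also have "\<dots> \<ge> (1 + (-s) * (r - 1)) * b' powr (-s)"
    using bern_convex_neg[OF r, of "-s"] assms by (intro mult_right_mono) auto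
  finally have "b powr (-s) \<ge> (1 + (-s) * (r - 1)) * b' powr (-s)" .
  moreover have "(1 + (-s) * (r - 1)) * b' powr (-s) = b' powr (-s) + s * b' powr (-s - 1) * (b' - b)"
    using bp by (simp add: r_def powr_diff field_simps)
  ultimately show ?thesis by simp
qed

lemma I4:
  fixes a b b' :: real assumes "0 < b" "b \<le> b'" "0 < a" "a \<le> 1"
  shows "(b powr (a - 1) - b' powr (a - 1)) * b \<le> (b' powr a - b powr a) / a"
proof -
  have bp: "0 < b'" using assms by simp
  define r where "r = b / b'"
  have r: "0 < r" "r \<le> 1" using assms bp by (auto simp: r_def)
  have "b = r * b'" using bp by (simp add: r_def)
  then have e1: "b powr a = r powr a * b' powr a" using r bp by (simp add: powr_mult)
  have e2: "b powr (a - 1) * b = b powr a" using assms by (simp add: powr_diff)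
  have e3: "b' powr (a - 1) * b = r * b' powr a" using bp by (simp add: r_def powr_diff)
  have k1: "r powr a \<le> 1" using r assms by (intro powr_le1) auto
  have k2: "a * (1 - r) \<le> 1 - r powr a" using bern_concave[OF r(1), of a] assms by (simp add: algebra_simps)
  have "a * (r powr a - r) \<le> 1 - r powr a"
  proof -
    have "a * (r powr a - r) \<le> a * (1 - r)" using k1 assms by (intro mult_left_mono) auto
    then show ?thesis using k2 by simp
  qed
  then have "a * ((r powr a - r) * b' powr a) \<le> (1 - r powr a) * b' powr a"
    using bp by (simp add: mult.assoc[symmetric] mult_right_mono)
  then have "(r powr a - r) * b' powr a \<le> ((1 - r powr a) * b' powr a) / a"
    using assms by (simp add: field_simps)
  then show ?thesis using e1 e2 e3 by (simp add: algebra_simps)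
qed

lemma conj_exp_gt1:
  fixes p p' :: real assumes "1 < p" "1/p + 1/p' = 1" shows "1 < p'"
proof -
  have a: "0 < 1/p" "1/p < 1" using assms by auto
  then have b: "0 < 1/p'" "1/p' < 1" using assms(2) by linarith+
  then have "0 < p'" by simp
  with b show ?thesis by (simp add: divide_less_eq)
qed

lemma young_int:
  fixes f g :: "'a \<Rightarrow> real"
  assumes p: "1 < p" "1/p + 1/p' = 1"
    and [measurable]: "f \<in> borel_measurable M" "g \<in> borel_measurable M"
    and nn: "\<And>x. x \<in> space M \<Longrightarrow> 0 \<le> f x" "\<And>x. x \<in> space M \<Longrightarrow> 0 \<le> g x"
    and i: "integrable M (\<lambda>x. f x powr p)" "integrable M (\<lambda>x. g x powr p')"
  shows "integrable M (\<lambda>x. f x * g x)"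
proof -
  have p': "1 < p'" using p
    by (rule conj_exp_gt1)
  show ?thesis
  proof (rule Bochner_Integration.integrable_bound[where f="\<lambda>x. f x powr p / p + g x powr p' / p'"])
    show "integrable M (\<lambda>x. f x powr p / p + g x powr p' / p')" using i by auto
    show "AE x in M. norm (f x * g x) \<le> norm (f x powr p / p + g x powr p' / p')"
    proof -
      have "\<And>x. x\<in>space M \<Longrightarrow> f x * g x \<le> f x powr p / p + g x powr p' / p'"
        using nn Youngs_inequality[OF p(1) p' p(2)] by auto
      then show ?thesis using nn by (auto intro!: AE_I2 simp: abs_mult intro: order_trans[OF _ abs_ge_self])
    qed
  qed auto
qed

lemma holder:
  fixes f g :: "'a \<Rightarrow> real"
  assumes p: "1 < p" "1/p + 1/p' = 1"
    and [measurable]: "f \<in> borel_measurable M" "g \<in> borel_measurable M"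
    and nn: "\<And>x. x \<in> space M \<Longrightarrow> 0 \<le> f x" "\<And>x. x \<in> space M \<Longrightarrow> 0 \<le> g x"
    and i: "integrable M (\<lambda>x. f x powr p)" "integrable M (\<lambda>x. g x powr p')"
  shows "(\<integral>x. f x * g x \<partial>M) \<le> (\<integral>x. f x powr p \<partial>M) powr (1/p) * (\<integral>x. g x powr p' \<partial>M) powr (1/p')"
proof -
  have p': "1 < p'" using p
    by (rule conj_exp_gt1)
  have ifg: "integrable M (\<lambda>x. f x * g x)" by (rule young_int[OF assms])
  define A where "A = (\<integral>x. f x powr p \<partial>M)"
  define B where "B = (\<integral>x. g x powr p' \<partial>M)"
  have A0: "0 \<le> A" unfolding A_def by (auto intro!: integral_nonneg_AE)
  have B0: "0 \<le> B" unfolding B_def by (auto intro!: integral_nonneg_AE)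
  show ?thesis
  proof (cases "A = 0 \<or> B = 0")
    case True
    then have "(AE x in M. f x powr p = 0) \<or> (AE x in M. g x powr p' = 0)"
    proof
      assume "A = 0"
      then have "AE x in M. f x powr p = 0"
        using i(1) unfolding A_def by (subst integral_nonneg_eq_0_iff_AE[symmetric]) auto
      then show ?thesis by simp
    next
      assume "B = 0"
      then have "AE x in M. g x powr p' = 0"
        using i(2) unfolding B_def by (subst integral_nonneg_eq_0_iff_AE[symmetric]) auto
      then show ?thesis by simp
    qed
    then have "AE x in M. f x * g x = 0" by (auto elim!: eventually_mono)
    then have "(\<integral>x. f x * g x \<partial>M) = (\<integral>x. 0 \<partial>M)" by (intro integral_cong_AE) auto
    then show ?thesis using A0 B0 by (simp add: A_def[symmetric] B_def[symmetric])
  next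
    case False
    then have Ap: "0 < A" and Bp: "0 < B" using A0 B0 by auto
    define a where "a = A powr (1/p)"
    define b where "b = B powr (1/p')"
    have ap: "0 < a" "a powr p = A" using Ap p by (auto simp: a_def powr_powr)
    have bp: "0 < b" "b powr p' = B" using Bp p' by (auto simp: b_def powr_powr)
    have pt: "f x * g x / (a * b) \<le> f x powr p / (p * A) + g x powr p' / (p' * B)" if "x \<in> space M" for x
    proof -
      have "(f x / a) * (g x / b) \<le> (f x / a) powr p / p + (g x / b) powr p' / p'"
        using Youngs_inequality[OF p(1) p' p(2), of "f x / a" "g x / b"] nn that ap bp by simp
      also have "(f x / a) powr p = f x powr p / A" using ap nn that by (simp add: powr_divide)
      also have "(g x / b) powr p' = g x powr p' / B" using bp nn that by (simp add: powr_divide)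
      finally show ?thesis by (simp add: field_simps)
    qed
    have "(\<integral>x. f x * g x / (a * b) \<partial>M) \<le> (\<integral>x. f x powr p / (p * A) + g x powr p' / (p' * B) \<partial>M)"
      using pt ifg i by (intro integral_mono) auto
    also have "\<dots> = A / (p * A) + B / (p' * B)" using i by (simp add: A_def B_def)
    also have "\<dots> = 1" using Ap Bp p by simp
    finally have "(\<integral>x. f x * g x \<partial>M) / (a * b) \<le> 1" by simp
    then show ?thesis using ap bp by (simp add: a_def b_def A_def B_def field_simps)
  qed
qed

lemma telesc: fixes f :: "nat \<Rightarrow> real" and N :: nat shows "(\<Sum>n\<in>{1..N}. f n - f (n - 1)) = f N - (f 0 :: real)"
  by (induction N) (simp_all add: sum.cl_ivl_Suc)

lemma telesc': fixes f :: "nat \<Rightarrow> real" and N :: nat shows "(\<Sum>n\<in>{1..N}. f (n - 1) - f n) = f 0 - (f N :: real)"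
  using telesc[of f N] by (simp add: sum_subtractf)

lemma sum_ind_powr:
  fixes c :: "nat \<Rightarrow> real"
  assumes "finite I" "\<And>i j. i\<in>I \<Longrightarrow> j\<in>I \<Longrightarrow> i \<noteq> j \<Longrightarrow> D i \<inter> D j = {}"
    "\<And>i. i\<in>I \<Longrightarrow> 0 \<le> c i" "0 < r"
  shows "(\<Sum>i\<in>I. c i * indicator (D i) y) powr r = (\<Sum>i\<in>I. c i powr r * indicator (D i) y)"
proof (cases "\<exists>k\<in>I. y \<in> D k")
  case True
  then obtain k where k: "k \<in> I" "y \<in> D k" by blast
  have z: "\<And>i. i \<in> I - {k} \<Longrightarrow> y \<notin> D i" using assms(2) k by blast
  have "(\<Sum>i\<in>I. c i * indicator (D i) y) = c k * indicator (D k) y + (\<Sum>i\<in>I-{k}. c i * indicator (D i) y)"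
    by (rule sum.remove[OF assms(1) k(1)])
  also have "(\<Sum>i\<in>I-{k}. c i * indicator (D i) y) = 0" using z by (intro sum.neutral) auto
  finally have 1: "(\<Sum>i\<in>I. c i * indicator (D i) y) = c k" using k by simp
  have "(\<Sum>i\<in>I. c i powr r * indicator (D i) y) = c k powr r * indicator (D k) y + (\<Sum>i\<in>I-{k}. c i powr r * indicator (D i) y)"
    by (rule sum.remove[OF assms(1) k(1)])
  also have "(\<Sum>i\<in>I-{k}. c i powr r * indicator (D i) y) = 0" using z by (intro sum.neutral) auto
  finally have 2: "(\<Sum>i\<in>I. c i powr r * indicator (D i) y) = c k powr r" using k by simp
  show ?thesis using 1 2 by simp
next
  case False
  then show ?thesis using assms by (simp add: indicator_def)
qed

lemma Lp_integrable:
  fixes G :: "'a \<Rightarrow> real"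
  assumes "prob_space M" "G \<in> borel_measurable M" "1 \<le> p" "integrable M (\<lambda>x. \<bar>G x\<bar> powr p)"
  shows "integrable M G"
proof -
  interpret prob_space M by fact
  have b: "\<bar>G x\<bar> \<le> 1 + \<bar>G x\<bar> powr p" for x
  proof (cases "\<bar>G x\<bar> \<le> 1")
    case True then show ?thesis using powr_ge_zero[of "\<bar>G x\<bar>" p] by linarith
  next
    case False
    then have "\<bar>G x\<bar> powr 1 \<le> \<bar>G x\<bar> powr p" using assms(3) by (intro powr_mono) auto
    then show ?thesis using False by simp
  qed
  show ?thesis
    by (rule Bochner_Integration.integrable_bound[where f="\<lambda>x. 1 + \<bar>G x\<bar> powr p"])
       (use assms b in \<open>auto intro!: AE_I2\<close>)
qed

lemma abs_int_le:
  fixes f g :: "'a \<Rightarrow> real"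
  assumes "integrable M f" "integrable M g" "\<And>x. x \<in> space M \<Longrightarrow> \<bar>f x\<bar> \<le> g x"
  shows "\<bar>\<integral>x. f x \<partial>M\<bar> \<le> (\<integral>x. g x \<partial>M)"
proof -
  have "\<bar>\<integral>x. f x \<partial>M\<bar> \<le> (\<integral>x. \<bar>f x\<bar> \<partial>M)" using integral_norm_bound[of M f] by simp
  also have "\<dots> \<le> (\<integral>x. g x \<partial>M)" using assms by (intro integral_mono) auto
  finally show ?thesis .
qed

lemma chain_t:
  fixes M :: "'a measure" and G :: "'a \<Rightarrow> real" and W :: "nat \<Rightarrow> 'a set" and m :: "nat \<Rightarrow> real"
  assumes M: "prob_space M"
    and Gm[measurable]: "G \<in> borel_measurable M"
    and Gp: "integrable M (\<lambda>x. \<bar>G x\<bar> powr p)"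
    and Wm: "\<And>k. k \<le> N \<Longrightarrow> W k \<in> sets M"
    and Wpos: "\<And>k. k \<le> N \<Longrightarrow> 0 < measure M (W k)"
    and Wdec: "\<And>n. 1 \<le> n \<Longrightarrow> n \<le> N \<Longrightarrow> W n \<subseteq> W (n - 1)"
    and MxB: "\<And>k. k \<le> N \<Longrightarrow> (\<integral>x. indicator (W k) x * \<bar>G x\<bar> \<partial>M) / measure M (W k) \<le> Mx"
    and mB: "\<And>n. 1 \<le> n \<Longrightarrow> n \<le> N \<Longrightarrow> 0 \<le> m n \<and> m n \<le> measure M (W n)"
    and par: "0 < \<alpha>" "\<alpha> < 1" "1 < p" "p < q" "1/p - 1/q = \<alpha>"
    and t: "0 < t"
  shows "(\<Sum>n\<in>{1..N}. m n powr \<alpha> * \<bar>(\<integral>x. indicator (W n) x * G x \<partial>M) / measure M (W n)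
            - (\<integral>x. indicator (W (n - 1)) x * G x \<partial>M) / measure M (W (n - 1))\<bar>)
         \<le> (3 + 2 / \<alpha>) * t powr \<alpha> * Mx
           + (q + (p / (p - 1) / q) powr (-(1 - 1/p))) * t powr (-1/q) * (\<integral>x. \<bar>G x\<bar> powr p \<partial>M) powr (1/p)"
proof -
  interpret prob_space M by fact
  define pc where "pc = p / (p - 1)"
  have pc: "1/p + 1/pc = 1" "1 < pc" "1/pc = 1 - 1/p" using par by (auto simp: pc_def field_simps)
  define s where "s = pc / q"
  have s: "0 < s" using pc par by (simp add: s_def)
  have aq: "\<alpha> - 1/p = -1/q" using par by simp
  have q1: "1 \<le> q" using par by simp
  have Gi: "integrable M G" using Lp_integrable[OF M Gm _ Gp] par by simp
  have aGi: "integrable M (\<lambda>x. \<bar>G x\<bar>)" using Gi by simp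
  define b where "b k = measure M (W k)" for k
  define \<mu> where "\<mu> k = (\<integral>x. indicator (W k) x * \<bar>G x\<bar> \<partial>M)" for k
  define D where "D n = W (n - 1) - W n" for n
  define \<nu> where "\<nu> n = (\<integral>x. indicator (D n) x * \<bar>G x\<bar> \<partial>M)" for n
  define IG where "IG k = (\<integral>x. indicator (W k) x * G x \<partial>M)" for k
  define JG where "JG n = (\<integral>x. indicator (D n) x * G x \<partial>M)" for n
  define nG where "nG = (\<integral>x. \<bar>G x\<bar> powr p \<partial>M) powr (1/p)"
  have nG0: "0 \<le> nG" by (simp add: nG_def)
  have Wsub: "W j \<subseteq> W i" if "i \<le> j" "j \<le> N" for i j
    using that
  proof (induction j)
    case 0 then show ?case by simp
  next
    case (Suc j)
    show ?case
    proof (cases "i = Suc j")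
      case False
      then have "W j \<subseteq> W i" using Suc by simp
      moreover have "W (Suc j) \<subseteq> W j" using Wdec[of "Suc j"] Suc by simp
      ultimately show ?thesis by blast
    qed simp
  qed
  have Dm: "D n \<in> sets M" if "1 \<le> n" "n \<le> N" for n using that Wm by (simp add: D_def)
  have Ddisj: "D i \<inter> D j = {}" if "i \<in> {1..N}" "j \<in> {1..N}" "i \<noteq> j" for i j
  proof -
    have *: "D j \<inter> D i = {}" if "i < j" "i \<in> {1..N}" "j \<in> {1..N}" for i j
    proof -
      have "W (j - 1) \<subseteq> W i" using Wsub[of i "j - 1"] that by simp
      then show ?thesis by (auto simp: D_def)
    qed
    show ?thesis using that *[of i j] *[of j i] by (cases "i < j") auto
  qed
  have bpos: "0 < b k" if "k \<le> N" for k using Wpos that by (simp add: b_def)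
  have bdec: "b n \<le> b (n - 1)" if "1 \<le> n" "n \<le> N" for n
    using that Wm Wdec by (auto simp: b_def intro!: finite_measure_mono)
  have bD: "measure M (D n) = b (n - 1) - b n" if "1 \<le> n" "n \<le> N" for n
    using that Wm Wdec by (simp add: b_def D_def finite_measure_Diff)
  have iW: "integrable M (\<lambda>x. indicator A x * f x)" if "A \<in> sets M" "integrable M f" for A and f :: "'a \<Rightarrow> real"
    using integrable_mult_indicator[OF that] by simp
  have \<mu>0: "0 \<le> \<mu> k" for k by (simp add: \<mu>_def)
  have \<nu>0: "0 \<le> \<nu> n" for n by (simp add: \<nu>_def)
  have \<mu>Mx: "\<mu> k \<le> b k * Mx" if "k \<le> N" for k
    using MxB[OF that] bpos[OF that] by (simp add: \<mu>_def b_def field_simps)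
  have Mx0: "0 \<le> Mx"
  proof -
    have "0 \<le> b 0 * Mx" using \<mu>Mx[of 0] \<mu>0[of 0] by linarith
    then show ?thesis using bpos[of 0] by (simp add: zero_le_mult_iff)
  qed
  have split: "\<mu> (n - 1) = \<mu> n + \<nu> n" "IG (n - 1) = IG n + JG n" if "1 \<le> n" "n \<le> N" for n
  proof -
    have ind: "indicator (W (n - 1)) x = indicator (W n) x + (indicator (D n) x :: real)" for x
      using Wdec[OF that] by (auto simp: D_def indicator_def)
    show "\<mu> (n - 1) = \<mu> n + \<nu> n" unfolding \<mu>_def \<nu>_def ind distrib_right
      using that Wm Dm aGi by (intro Bochner_Integration.integral_add iW) auto
    show "IG (n - 1) = IG n + JG n" unfolding IG_def JG_def ind distrib_right
      using that Wm Dm Gi by (intro Bochner_Integration.integral_add iW) auto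
  qed
  have IGb: "\<bar>IG k\<bar> \<le> \<mu> k" if "k \<le> N" for k
    unfolding IG_def \<mu>_def using iW[OF Wm[OF that] Gi] iW[OF Wm[OF that] aGi]
    by (intro abs_int_le) (auto simp: abs_mult)
  have JGb: "\<bar>JG n\<bar> \<le> \<nu> n" if "1 \<le> n" "n \<le> N" for n
    unfolding JG_def \<nu>_def using iW[OF Dm[OF that] Gi] iW[OF Dm[OF that] aGi]
    by (intro abs_int_le) (auto simp: abs_mult)
  have indp: "indicator A x powr r = (indicator A x :: real)" if "0 < r" for A x and r :: real
    using that by (simp add: indicator_def)
  have \<mu>H: "\<mu> k \<le> b k powr (1 - 1/p) * nG" if "k \<le> N" for k
  proof -
    have "(\<integral>x. \<bar>G x\<bar> * indicator (W k) x \<partial>M)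
        \<le> (\<integral>x. \<bar>G x\<bar> powr p \<partial>M) powr (1/p) * (\<integral>x. indicator (W k) x powr pc \<partial>M) powr (1/pc)"
      using Wm[OF that] Gp pc par by (intro holder) (auto simp: indp less_top[symmetric] intro!: integrable_real_indicator)
    also have "(\<integral>x. indicator (W k) x powr pc \<partial>M) = b k"
      using pc Wm[OF that] by (simp add: indp b_def)
    finally show ?thesis using pc by (simp add: \<mu>_def nG_def mult.commute)
  qed
  define \<psi> where "\<psi> u = q * (max u t) powr (-1/q)" for u
  define chi where "chi u = (if u < t then 1 else 0 :: real)" for u
  define \<phi> where "\<phi> u = (min u t) powr \<alpha> / \<alpha>" for u
  define K where "K = 1 + 1 / \<alpha>"
  define \<Phi> where "\<Phi> k = (if b k < t then b k powr (\<alpha> - 1) * \<mu> k + b k powr \<alpha> * Mx / \<alpha> else K * t powr \<alpha> * Mx)" for k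
  define c where "c n = m n powr \<alpha> / b (n - 1)" for n
  define cc where "cc n = (if t \<le> b n then c n else 0)" for n
  define V where "V n = (\<psi> (b n) - \<psi> (b (n - 1))) * nG + cc n * \<nu> n
      + 2 * t powr \<alpha> * Mx * (chi (b n) - chi (b (n - 1))) + Mx * (\<phi> (b (n - 1)) - \<phi> (b n))
      + (\<Phi> (n - 1) - \<Phi> n)" for n
  have pb: "x * x powr (a - 1) = x powr a" if "0 < x" for x a :: real
    using that powr_mult_base[of x "a - 1"] by simp
  have K0: "0 < K" unfolding K_def by (rule add_pos_pos) (use par in auto)
  have \<Phi>le: "0 \<le> \<Phi> k \<and> \<Phi> k \<le> K * t powr \<alpha> * Mx" if "k \<le> N" for k
  proof (cases "b k < t")
    case True
    have bk: "0 < b k" using bpos[OF that] .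
    have "b k powr (\<alpha> - 1) * \<mu> k \<le> b k powr (\<alpha> - 1) * (b k * Mx)"
      using \<mu>Mx[OF that] by (intro mult_left_mono) auto
    also have "\<dots> = b k powr \<alpha> * Mx" using pb[OF bk] by (simp add: mult.assoc[symmetric] mult.commute)
    finally have 1: "b k powr (\<alpha> - 1) * \<mu> k \<le> b k powr \<alpha> * Mx" .
    have 2: "b k powr \<alpha> \<le> t powr \<alpha>" using True bk par by (intro powr_mono2) auto
    have "\<Phi> k \<le> b k powr \<alpha> * Mx + b k powr \<alpha> * Mx / \<alpha>" using True 1 by (simp add: \<Phi>_def)
    also have "\<dots> = K * (b k powr \<alpha> * Mx)" using par by (simp add: K_def field_simps)
    also have "\<dots> \<le> K * (t powr \<alpha> * Mx)" using 2 Mx0 K0 by (intro mult_left_mono mult_right_mono) auto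
    finally have "\<Phi> k \<le> K * t powr \<alpha> * Mx" by (simp add: mult.assoc)
    moreover have "0 \<le> \<Phi> k" using True \<mu>0[of k] Mx0 par by (simp add: \<Phi>_def)
    ultimately show ?thesis by simp
  next
    case False
    then show ?thesis using K0 Mx0 by (simp add: \<Phi>_def)
  qed
  have key: "m n powr \<alpha> * \<bar>IG n / b n - IG (n - 1) / b (n - 1)\<bar> \<le> V n" if n: "1 \<le> n" "n \<le> N" for n
  proof -
    define bb where "bb = b n"
    define bb' where "bb' = b (n - 1)"
    have bb: "0 < bb" "bb \<le> bb'" "0 < bb'" using bpos[of n] bpos[of "n - 1"] bdec[OF n] n
      by (auto simp: bb_def bb'_def)
    have mu1: "\<mu> n \<le> bb * Mx" using \<mu>Mx[of n] n by (simp add: bb_def)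
    have mu2: "\<mu> (n - 1) \<le> bb' * Mx" using \<mu>Mx[of "n - 1"] n by (simp add: bb'_def)
    have spl: "\<mu> (n - 1) = \<mu> n + \<nu> n" "IG (n - 1) = IG n + JG n" using split[OF n] by auto
    have ab: "\<bar>IG n\<bar> \<le> \<mu> n" "\<bar>JG n\<bar> \<le> \<nu> n" using IGb[of n] JGb[OF n] n by auto
    define mm where "mm = m n"
    have mm: "0 \<le> mm" "mm \<le> bb" using mB[OF n] by (auto simp: mm_def bb_def b_def)
    have ma: "mm powr \<alpha> \<le> bb powr \<alpha>" "0 \<le> mm powr \<alpha>" using mm par by (auto intro: powr_mono2)
    define T1 where "T1 = (1/bb - 1/bb') * \<mu> n"
    define T2 where "T2 = \<nu> n / bb'"
    have d0: "0 \<le> 1/bb - 1/bb'" using bb by (simp add: frac_le)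
    have T1n: "0 \<le> T1" using d0 \<mu>0 by (simp add: T1_def)
    have T2n: "0 \<le> T2" using bb \<nu>0 by (simp add: T2_def)
    have step1: "\<bar>IG n / bb - IG (n - 1) / bb'\<bar> \<le> T1 + T2"
    proof -
      have "IG n / bb - IG (n - 1) / bb' = IG n * (1/bb - 1/bb') - JG n / bb'"
        using spl bb by (simp add: field_simps)
      then have "\<bar>IG n / bb - IG (n - 1) / bb'\<bar> \<le> \<bar>IG n * (1/bb - 1/bb')\<bar> + \<bar>JG n / bb'\<bar>"
        using abs_triangle_ineq4[of "IG n * (1/bb - 1/bb')" "JG n / bb'"] by simp
      also have "\<dots> = \<bar>IG n\<bar> * (1/bb - 1/bb') + \<bar>JG n\<bar> / bb'" using d0 bb by (simp add: abs_mult)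
      also have "\<dots> \<le> \<mu> n * (1/bb - 1/bb') + \<nu> n / bb'"
        using ab d0 bb by (intro add_mono mult_right_mono divide_right_mono) auto
      finally show ?thesis by (simp add: T1_def T2_def mult.commute)
    qed
    have LHS: "m n powr \<alpha> * \<bar>IG n / b n - IG (n - 1) / b (n - 1)\<bar> \<le> mm powr \<alpha> * T1 + mm powr \<alpha> * T2"
    proof -
      have "mm powr \<alpha> * \<bar>IG n / bb - IG (n - 1) / bb'\<bar> \<le> mm powr \<alpha> * (T1 + T2)"
        using step1 ma by (intro mult_left_mono) auto
      then show ?thesis by (simp add: mm_def bb_def bb'_def distrib_left)
    qed
    have bT1: "mm powr \<alpha> * T1 \<le> bb powr \<alpha> * T1" using ma T1n by (intro mult_right_mono) auto
    have bT2: "mm powr \<alpha> * T2 \<le> bb powr \<alpha> * T2" using ma T2n by (intro mult_right_mono) auto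
    have N1: "0 \<le> \<psi> bb - \<psi> bb'"
    proof -
      have "(max bb' t) powr (-1/q) \<le> (max bb t) powr (-1/q)" using bb t par by (intro powr_mono2') auto
      then show ?thesis using par by (simp add: \<psi>_def)
    qed
    have cc0: "0 \<le> cc n" using bb ma by (simp add: cc_def c_def mm_def bb'_def)
    have N2: "0 \<le> cc n * \<nu> n" using cc0 \<nu>0 by simp
    have N3: "0 \<le> chi bb - chi bb'" using bb by (simp add: chi_def)
    have N4: "0 \<le> \<phi> bb' - \<phi> bb"
    proof -
      have "(min bb t) powr \<alpha> \<le> (min bb' t) powr \<alpha>" using bb t par by (intro powr_mono2) auto
      then show ?thesis using par by (simp add: \<phi>_def divide_right_mono)
    qed
    have N5: "(if bb' < t then bb' powr (\<alpha> - 1) * \<nu> n else 0) \<le> \<Phi> (n - 1) - \<Phi> n"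
    proof (cases "bb' < t")
      case True
      then have bt: "bb < t" using bb by simp
      have e1: "\<Phi> (n - 1) = bb' powr (\<alpha> - 1) * (\<mu> n + \<nu> n) + bb' powr \<alpha> * Mx / \<alpha>"
        using True spl by (simp add: \<Phi>_def bb'_def)
      have e2: "\<Phi> n = bb powr (\<alpha> - 1) * \<mu> n + bb powr \<alpha> * Mx / \<alpha>"
        using bt by (simp add: \<Phi>_def bb_def)
      have cpos: "0 \<le> bb powr (\<alpha> - 1) - bb' powr (\<alpha> - 1)"
        using powr_mono2'[of "\<alpha> - 1" bb bb'] bb par by simp
      have "(bb powr (\<alpha> - 1) - bb' powr (\<alpha> - 1)) * \<mu> n \<le> (bb powr (\<alpha> - 1) - bb' powr (\<alpha> - 1)) * (bb * Mx)"
        using cpos mu1 by (intro mult_left_mono) auto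
      also have "\<dots> = ((bb powr (\<alpha> - 1) - bb' powr (\<alpha> - 1)) * bb) * Mx" by simp
      also have "\<dots> \<le> ((bb' powr \<alpha> - bb powr \<alpha>) / \<alpha>) * Mx"
        using I4[of bb bb' \<alpha>] bb par Mx0 by (intro mult_right_mono) auto
      finally have "(bb powr (\<alpha> - 1) - bb' powr (\<alpha> - 1)) * \<mu> n \<le> ((bb' powr \<alpha> - bb powr \<alpha>) / \<alpha>) * Mx" .
      then show ?thesis using True e1 e2 by (simp add: algebra_simps add_divide_distrib diff_divide_distrib)
    next
      case False
      have "\<Phi> n \<le> K * t powr \<alpha> * Mx" using \<Phi>le[of n] n by simp
      then show ?thesis using False by (simp add: \<Phi>_def bb'_def)
    qed
    have N5': "0 \<le> \<Phi> (n - 1) - \<Phi> n" using N5 bb \<nu>0 by (smt (verit) powr_ge_zero zero_le_mult_iff)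
    have Vn: "V n = (\<psi> bb - \<psi> bb') * nG + cc n * \<nu> n + 2 * t powr \<alpha> * Mx * (chi bb - chi bb')
        + Mx * (\<phi> bb' - \<phi> bb) + (\<Phi> (n - 1) - \<Phi> n)" by (simp add: V_def bb_def bb'_def)
    have P1: "0 \<le> (\<psi> bb - \<psi> bb') * nG" using N1 nG0 by simp
    have P3: "0 \<le> 2 * t powr \<alpha> * Mx * (chi bb - chi bb')" using N3 Mx0 by simp
    have P4: "0 \<le> Mx * (\<phi> bb' - \<phi> bb)" using N4 Mx0 by simp
    consider (L) "t \<le> bb" | (C) "bb < t" "t \<le> bb'" | (S) "bb' < t" by linarith
    then show ?thesis
    proof cases
      case L
      have "bb powr \<alpha> * T1 \<le> bb powr \<alpha> * ((1/bb - 1/bb') * (bb powr (1 - 1/p) * nG))"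
        unfolding T1_def using \<mu>H[of n] n d0 by (intro mult_left_mono) (auto simp: bb_def)
      also have "\<dots> = (bb powr \<alpha> * bb powr (1 - 1/p)) * (1/bb - 1/bb') * nG" by (simp add: algebra_simps)
      also have "bb powr \<alpha> * bb powr (1 - 1/p) = bb * bb powr (-1/q)"
      proof -
        have ex: "\<alpha> + (1 - 1/p) = 1 + (-1/q)" using aq by simp
        have "bb powr \<alpha> * bb powr (1 - 1/p) = bb powr (1 + (-1/q))" by (simp only: powr_add[symmetric] ex)
        also have "\<dots> = bb * bb powr (-1/q)" using bb powr_add[of bb 1 "-1/q"] by simp
        finally show ?thesis .
      qed
      also have "bb * bb powr (-1/q) * (1/bb - 1/bb') * nG = (bb powr (-1/q) * (1 - bb / bb')) * nG"
        using bb by (simp add: field_simps)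
      also have "\<dots> \<le> (q * (bb powr (-1/q) - bb' powr (-1/q))) * nG"
        using I2[of bb bb' q] bb q1 nG0 by (intro mult_right_mono) auto
      also have "q * (bb powr (-1/q) - bb' powr (-1/q)) = \<psi> bb - \<psi> bb'"
      proof -
        have "max bb t = bb" "max bb' t = bb'" using L bb by auto
        then show ?thesis by (simp add: \<psi>_def algebra_simps)
      qed
      finally have A: "mm powr \<alpha> * T1 \<le> (\<psi> bb - \<psi> bb') * nG" using bT1 by linarith
      have B: "mm powr \<alpha> * T2 = cc n * \<nu> n"
        using L by (simp add: T2_def cc_def c_def mm_def bb_def bb'_def)
      have "0 \<le> \<Phi> (n - 1) - \<Phi> n" by (rule N5')
      then show ?thesis using LHS A B Vn P3 P4 by linarith
    next
      case C
      have "bb powr \<alpha> * T1 \<le> bb powr \<alpha> * ((1/bb) * (bb * Mx))"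
        unfolding T1_def using mu1 bb \<mu>0 by (intro mult_left_mono mult_mono) auto
      also have "\<dots> = bb powr \<alpha> * Mx" using bb by simp
      also have "\<dots> \<le> t powr \<alpha> * Mx" using C bb par Mx0 by (intro mult_right_mono powr_mono2) auto
      finally have A: "mm powr \<alpha> * T1 \<le> t powr \<alpha> * Mx" using bT1 by linarith
      have "T2 \<le> Mx" using mu2 spl \<mu>0[of n] bb by (simp add: T2_def divide_le_eq mult.commute)
      then have "bb powr \<alpha> * T2 \<le> bb powr \<alpha> * Mx" by (intro mult_left_mono) auto
      also have "\<dots> \<le> t powr \<alpha> * Mx" using C bb par Mx0 by (intro mult_right_mono powr_mono2) auto
      finally have B: "mm powr \<alpha> * T2 \<le> t powr \<alpha> * Mx" using bT2 by linarith
      have "chi bb - chi bb' = 1" using C by (simp add: chi_def)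
      then have "2 * t powr \<alpha> * Mx * (chi bb - chi bb') = 2 * (t powr \<alpha> * Mx)" by simp
      then show ?thesis using LHS A B Vn P1 N2 P4 N5' by linarith
    next
      case S
      have bt: "bb < t" using S bb by simp
      have "bb powr \<alpha> * T1 \<le> bb powr \<alpha> * ((1/bb - 1/bb') * (bb * Mx))"
        unfolding T1_def using mu1 d0 by (intro mult_left_mono) auto
      also have "\<dots> = bb powr \<alpha> * (1 - bb / bb') * Mx" using bb by (simp add: field_simps)
      also have "\<dots> \<le> bb' powr \<alpha> * (1 - bb / bb') * Mx"
        using bb par Mx0 by (intro mult_right_mono powr_mono2) (auto simp: field_simps)
      also have "bb' powr \<alpha> * (1 - bb / bb') = bb' powr (\<alpha> - 1) * (bb' - bb)"
        using bb by (simp add: powr_diff field_simps)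
      also have "bb' powr (\<alpha> - 1) * (bb' - bb) * Mx \<le> ((bb' powr \<alpha> - bb powr \<alpha>) / \<alpha>) * Mx"
        using I1[of bb bb' \<alpha>] bb par Mx0 by (intro mult_right_mono) (auto simp: field_simps)
      also have "(bb' powr \<alpha> - bb powr \<alpha>) / \<alpha> = \<phi> bb' - \<phi> bb"
        using S bt by (simp add: \<phi>_def min_def diff_divide_distrib)
      finally have A: "mm powr \<alpha> * T1 \<le> Mx * (\<phi> bb' - \<phi> bb)" using bT1 by (simp add: mult.commute)
      have "bb powr \<alpha> * T2 \<le> bb' powr \<alpha> * T2" using bb par T2n by (intro mult_right_mono powr_mono2) auto
      also have "bb' powr \<alpha> * T2 = bb' powr (\<alpha> - 1) * \<nu> n" using bb by (simp add: T2_def powr_diff)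
      finally have B: "mm powr \<alpha> * T2 \<le> \<Phi> (n - 1) - \<Phi> n" using bT2 N5 S by simp
      then show ?thesis using LHS A B Vn P1 N2 P3 by linarith
    qed
  qed
  have sumV: "(\<Sum>n\<in>{1..N}. V n) = (\<psi> (b N) - \<psi> (b 0)) * nG + (\<Sum>n\<in>{1..N}. cc n * \<nu> n)
      + 2 * t powr \<alpha> * Mx * (chi (b N) - chi (b 0)) + Mx * (\<phi> (b 0) - \<phi> (b N)) + (\<Phi> 0 - \<Phi> N)"
  proof -
    have t1: "(\<Sum>n\<in>{1..N}. \<psi> (b n) - \<psi> (b (n - 1))) = \<psi> (b N) - \<psi> (b 0)"
      by (rule telesc)
    have t2: "(\<Sum>n\<in>{1..N}. chi (b n) - chi (b (n - 1))) = chi (b N) - chi (b 0)"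
      by (rule telesc)
    have t3: "(\<Sum>n\<in>{1..N}. \<phi> (b (n - 1)) - \<phi> (b n)) = \<phi> (b 0) - \<phi> (b N)"
      by (rule telesc')
    have t4: "(\<Sum>n\<in>{1..N}. \<Phi> (n - 1) - \<Phi> n) = \<Phi> 0 - \<Phi> N"
      by (rule telesc')
    show ?thesis unfolding V_def sum.distrib
      by (simp only: t1 t2 t3 t4 flip: sum_distrib_left sum_distrib_right)
  qed
  have LLb: "(\<Sum>n\<in>{1..N}. cc n * \<nu> n) \<le> s powr (-(1 - 1/p)) * t powr (-1/q) * nG"
  proof -
    have cc0: "0 \<le> cc n" for n by (simp add: cc_def c_def b_def)
    define h where "h y = (\<Sum>n\<in>{1..N}. cc n * indicator (D n) y)" for y
    have hm: "h \<in> borel_measurable M" unfolding h_def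
      by (intro borel_measurable_sum borel_measurable_times borel_measurable_const borel_measurable_indicator Dm) auto
    have h0: "0 \<le> h y" for y unfolding h_def using cc0 by (intro sum_nonneg) auto
    have hp: "h y powr pc = (\<Sum>n\<in>{1..N}. cc n powr pc * indicator (D n) y)" for y
      unfolding h_def using Ddisj cc0 pc by (intro sum_ind_powr) auto
    have iD: "integrable M (\<lambda>y. a * indicator (D n) y :: real)" if "n \<in> {1..N}" for a n
      using Dm that by (intro integrable_mult_right integrable_real_indicator) (auto simp: less_top[symmetric])
    have ihp: "integrable M (\<lambda>y. h y powr pc)" unfolding hp using iD by (intro Bochner_Integration.integrable_sum) auto
    have "(\<Sum>n\<in>{1..N}. cc n * \<nu> n) = (\<Sum>n\<in>{1..N}. (\<integral>y. cc n * (indicator (D n) y * \<bar>G y\<bar>) \<partial>M))"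
      by (simp add: \<nu>_def)
    also have "\<dots> = (\<integral>y. (\<Sum>n\<in>{1..N}. cc n * (indicator (D n) y * \<bar>G y\<bar>)) \<partial>M)"
      using iW[OF Dm aGi] by (intro Bochner_Integration.integral_sum[symmetric] integrable_mult_right) auto
    also have "\<dots> = (\<integral>y. \<bar>G y\<bar> * h y \<partial>M)"
      unfolding h_def sum_distrib_left by (intro Bochner_Integration.integral_cong refl sum.cong) (simp_all add: mult_ac)
    finally have H1: "(\<Sum>n\<in>{1..N}. cc n * \<nu> n) = (\<integral>y. \<bar>G y\<bar> * h y \<partial>M)" .
    have H2: "(\<integral>y. \<bar>G y\<bar> * h y \<partial>M) \<le> nG * (\<integral>y. h y powr pc \<partial>M) powr (1/pc)"
      unfolding nG_def using Gp ihp hm h0 pc par by (intro holder) auto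
    have H3: "(\<integral>y. h y powr pc \<partial>M) = (\<Sum>n\<in>{1..N}. cc n powr pc * measure M (D n))"
    proof -
      have "(\<integral>y. h y powr pc \<partial>M) = (\<Sum>n\<in>{1..N}. (\<integral>y. cc n powr pc * indicator (D n) y \<partial>M))"
        unfolding hp using iD by (intro Bochner_Integration.integral_sum) auto
      also have "\<dots> = (\<Sum>n\<in>{1..N}. cc n powr pc * measure M (D n))"
        using Dm by (intro sum.cong) (auto simp: Int_absorb2 sets.sets_into_space)
      finally show ?thesis .
    qed
    have H4: "(\<Sum>n\<in>{1..N}. cc n powr pc * measure M (D n)) \<le> t powr (-s) / s"
    proof -
      define \<rho> where "\<rho> u = (max u t) powr (-s) / s" for u
      have ea: "(\<alpha> - 1) * pc = -s - 1"
      proof -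
        have "\<alpha> - 1 = - (1/pc) - 1/q" using par pc by simp
        then have "(\<alpha> - 1) * pc = (- (1/pc) - 1/q) * pc" by simp
        also have "\<dots> = -1 - pc/q" using pc by (simp add: field_simps)
        finally show ?thesis by (simp add: s_def)
      qed
      have trm: "cc n powr pc * measure M (D n) \<le> \<rho> (b n) - \<rho> (b (n - 1))" if n: "1 \<le> n" "n \<le> N" for n
      proof -
        define bb where "bb = b n"
        define bb' where "bb' = b (n - 1)"
        have bb: "0 < bb" "bb \<le> bb'" "0 < bb'" using bpos[of n] bpos[of "n - 1"] bdec[OF n] n
          by (auto simp: bb_def bb'_def)
        have mD: "measure M (D n) = bb' - bb" using bD[OF n] by (simp add: bb_def bb'_def)
        have mon: "0 \<le> \<rho> bb - \<rho> bb'"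
        proof -
          have "(max bb' t) powr (-s) \<le> (max bb t) powr (-s)" using bb t s by (intro powr_mono2') auto
          then show ?thesis using s by (simp add: \<rho>_def divide_right_mono)
        qed
        show ?thesis
        proof (cases "t \<le> bb")
          case True
          have "m n powr \<alpha> \<le> bb powr \<alpha>" using mB[OF n] par by (intro powr_mono2) (auto simp: bb_def b_def)
          also have "\<dots> \<le> bb' powr \<alpha>" using bb par by (intro powr_mono2) auto
          finally have "cc n \<le> bb' powr \<alpha> / bb'" using True bb by (simp add: cc_def c_def bb_def bb'_def divide_right_mono)
          also have "\<dots> = bb' powr (\<alpha> - 1)" using bb by (simp add: powr_diff)
          finally have "cc n powr pc \<le> (bb' powr (\<alpha> - 1)) powr pc" using cc0 pc by (intro powr_mono2) auto
          also have "\<dots> = bb' powr (-s - 1)" using bb by (simp add: powr_powr ea)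
          finally have c1: "cc n powr pc \<le> bb' powr (-s - 1)" .
          have "cc n powr pc * measure M (D n) \<le> bb' powr (-s - 1) * (bb' - bb)"
            using c1 bb by (simp add: mD mult_right_mono)
          also have "\<dots> \<le> (bb powr (-s) - bb' powr (-s)) / s"
            using I3[of bb bb' s] bb s by (simp add: field_simps)
          also have "\<dots> = \<rho> bb - \<rho> bb'"
          proof -
            have "max bb t = bb" "max bb' t = bb'" using True bb by auto
            then show ?thesis by (simp add: \<rho>_def diff_divide_distrib)
          qed
          finally show ?thesis by (simp add: bb_def bb'_def)
        next
          case False
          then have "cc n = 0" by (simp add: cc_def bb_def)
          then show ?thesis using mon pc by (simp add: bb_def bb'_def)
        qed
      qed
      have "(\<Sum>n\<in>{1..N}. cc n powr pc * measure M (D n)) \<le> (\<Sum>n\<in>{1..N}. \<rho> (b n) - \<rho> (b (n - 1)))"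
        using trm by (intro sum_mono) auto
      also have "\<dots> = \<rho> (b N) - \<rho> (b 0)" by (rule telesc)
      also have "\<dots> \<le> t powr (-s) / s"
      proof -
        have "(max (b N) t) powr (-s) \<le> t powr (-s)" using t s by (intro powr_mono2') auto
        then have A: "\<rho> (b N) \<le> t powr (-s) / s" using s by (simp add: \<rho>_def divide_right_mono)
        have B: "0 \<le> \<rho> (b 0)" using s by (simp add: \<rho>_def)
        show ?thesis using A B by linarith
      qed
      finally show ?thesis .
    qed
    have "(\<Sum>n\<in>{1..N}. cc n powr pc * measure M (D n)) powr (1/pc) \<le> (t powr (-s) / s) powr (1/pc)"
      using H4
      using pc cc0 par by (intro powr_mono2 sum_nonneg mult_nonneg_nonneg) auto
    also have "(t powr (-s) / s) powr (1/pc) = s powr (-(1 - 1/p)) * t powr (-1/q)"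
    proof -
      have "(t powr (-s) / s) powr (1/pc) = (t powr (-s)) powr (1/pc) / s powr (1/pc)"
        using t s by (simp add: powr_divide)
      also have "(t powr (-s)) powr (1/pc) = t powr (-1/q)"
      proof -
        have e: "-s * (1/pc) = -1/q" using pc(2) by (simp add: s_def)
        show ?thesis by (simp only: powr_powr e)
      qed
      also have "t powr (-1/q) / s powr (1/pc) = t powr (-1/q) / s powr (1 - 1/p)" using pc(3) by simp
      also have "\<dots> = s powr (-(1 - 1/p)) * t powr (-1/q)"
        unfolding powr_minus_divide[of s "1 - 1/p"] by simp
      finally show ?thesis .
    qed
    finally have H5: "(\<integral>y. h y powr pc \<partial>M) powr (1/pc) \<le> s powr (-(1 - 1/p)) * t powr (-1/q)"
      unfolding H3 .
    have "nG * (\<integral>y. h y powr pc \<partial>M) powr (1/pc) \<le> nG * (s powr (-(1 - 1/p)) * t powr (-1/q))"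
      using H5 nG0 by (rule mult_left_mono)
    then show ?thesis using H1 H2 by (simp add: mult_ac)
  qed
  have b1: "\<psi> (b N) - \<psi> (b 0) \<le> q * t powr (-1/q)"
  proof -
    have "(max (b N) t) powr (-1/q) \<le> t powr (-1/q)" using t par by (intro powr_mono2') auto
    then have A: "q * (max (b N) t) powr (-1/q) \<le> q * t powr (-1/q)" using par by (intro mult_left_mono) auto
    have B: "0 \<le> q * (max (b 0) t) powr (-1/q)" using par by simp
    show ?thesis unfolding \<psi>_def using A B by linarith
  qed
  have b2: "chi (b N) - chi (b 0) \<le> 1" by (simp add: chi_def)
  have b3: "\<phi> (b 0) - \<phi> (b N) \<le> t powr \<alpha> / \<alpha>"
  proof -
    have "(min (b 0) t) powr \<alpha> \<le> t powr \<alpha>" using t par bpos[of 0] by (intro powr_mono2) auto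
    then have A: "(min (b 0) t) powr \<alpha> / \<alpha> \<le> t powr \<alpha> / \<alpha>" using par by (intro divide_right_mono) auto
    have B: "0 \<le> (min (b N) t) powr \<alpha> / \<alpha>" using par by simp
    show ?thesis unfolding \<phi>_def using A B by linarith
  qed
  have b4: "\<Phi> 0 - \<Phi> N \<le> K * t powr \<alpha> * Mx" using \<Phi>le[of 0] \<Phi>le[of N] by simp
  have "(\<Sum>n\<in>{1..N}. m n powr \<alpha> * \<bar>IG n / b n - IG (n - 1) / b (n - 1)\<bar>) \<le> (\<Sum>n\<in>{1..N}. V n)"
    using key by (intro sum_mono) auto
  also have "\<dots> \<le> q * t powr (-1/q) * nG + s powr (-(1 - 1/p)) * t powr (-1/q) * nG
      + 2 * t powr \<alpha> * Mx + Mx * (t powr \<alpha> / \<alpha>) + K * t powr \<alpha> * Mx"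
  proof -
    have "(\<psi> (b N) - \<psi> (b 0)) * nG \<le> q * t powr (-1/q) * nG" using b1 nG0 by (rule mult_right_mono)
    moreover have "2 * t powr \<alpha> * Mx * (chi (b N) - chi (b 0)) \<le> 2 * t powr \<alpha> * Mx"
      using b2 Mx0 by (simp add: mult_left_le)
    moreover have "Mx * (\<phi> (b 0) - \<phi> (b N)) \<le> Mx * (t powr \<alpha> / \<alpha>)" using b3 Mx0 by (rule mult_left_mono)
    ultimately show ?thesis unfolding sumV using LLb b4 by linarith
  qed
  also have "\<dots> = (3 + 2 / \<alpha>) * t powr \<alpha> * Mx + (q + s powr (-(1 - 1/p))) * t powr (-1/q) * nG"
    by (simp add: K_def algebra_simps add_divide_distrib)
  finally show ?thesis by (simp add: IG_def b_def s_def pc_def nG_def)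
qed


lemma chain_bound:
  fixes M :: "'a measure" and G :: "'a \<Rightarrow> real" and W :: "nat \<Rightarrow> 'a set" and m :: "nat \<Rightarrow> real"
  assumes M: "prob_space M"
    and Gm[measurable]: "G \<in> borel_measurable M"
    and Gp: "integrable M (\<lambda>x. \<bar>G x\<bar> powr p)"
    and Wm: "\<And>k. k \<le> N \<Longrightarrow> W k \<in> sets M"
    and Wpos: "\<And>k. k \<le> N \<Longrightarrow> 0 < measure M (W k)"
    and Wdec: "\<And>n. 1 \<le> n \<Longrightarrow> n \<le> N \<Longrightarrow> W n \<subseteq> W (n - 1)"
    and MxB: "\<And>k. k \<le> N \<Longrightarrow> (\<integral>x. indicator (W k) x * \<bar>G x\<bar> \<partial>M) / measure M (W k) \<le> Mx"
    and mB: "\<And>n. 1 \<le> n \<Longrightarrow> n \<le> N \<Longrightarrow> 0 \<le> m n \<and> m n \<le> measure M (W n)"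
    and par: "0 < \<alpha>" "\<alpha> < 1" "1 < p" "p < q" "1/p - 1/q = \<alpha>"
  shows "(\<Sum>n\<in>{1..N}. m n powr \<alpha> * \<bar>(\<integral>x. indicator (W n) x * G x \<partial>M) / measure M (W n)
            - (\<integral>x. indicator (W (n - 1)) x * G x \<partial>M) / measure M (W (n - 1))\<bar>)
         \<le> ((3 + 2 / \<alpha>) + (q + (p / (p - 1) / q) powr (-(1 - 1/p))))
            * Mx powr (p/q) * ((\<integral>x. \<bar>G x\<bar> powr p \<partial>M) powr (1/p)) powr (1 - p/q)"
proof -
  define S where "S = (\<Sum>n\<in>{1..N}. m n powr \<alpha> * \<bar>(\<integral>x. indicator (W n) x * G x \<partial>M) / measure M (W n)
            - (\<integral>x. indicator (W (n - 1)) x * G x \<partial>M) / measure M (W (n - 1))\<bar>)"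
  define K1 where "K1 = 3 + 2 / \<alpha>"
  define K2 where "K2 = q + (p / (p - 1) / q) powr (-(1 - 1/p))"
  define nG where "nG = (\<integral>x. \<bar>G x\<bar> powr p \<partial>M) powr (1/p)"
  have K1: "0 < K1" using par by (simp add: K1_def add_pos_pos)
  have K2: "0 < K2" using par by (simp add: K2_def add_pos_nonneg)
  have nG0: "0 \<le> nG" by (simp add: nG_def)
  have ct: "S \<le> K1 * t powr \<alpha> * Mx + K2 * t powr (-1/q) * nG" if "0 < t" for t
    unfolding S_def K1_def K2_def nG_def mult.assoc[symmetric]
    by (rule chain_t[where M=M and G=G and W=W and m=m and N=N and Mx=Mx]) (use assms that in auto)
  have Mx0: "0 \<le> Mx"
  proof -
    have "0 \<le> (\<integral>x. indicator (W 0) x * \<bar>G x\<bar> \<partial>M) / measure M (W 0)" by simp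
    then show ?thesis using MxB[of 0] by linarith
  qed
  have S0: "0 \<le> S" unfolding S_def by (intro sum_nonneg mult_nonneg_nonneg) auto
  have ex: "p * \<alpha> = 1 - p/q" using par by (simp add: field_simps)
  show ?thesis
  proof (cases "Mx = 0 \<or> nG = 0")
    case False
    then have Mp: "0 < Mx" and nGp: "0 < nG" using Mx0 nG0 by auto
    define t where "t = (nG / Mx) powr p"
    have tp: "0 < t" using Mp nGp by (simp add: t_def)
    have e1: "t powr \<alpha> * Mx = Mx powr (p/q) * nG powr (1 - p/q)"
    proof -
      have "t powr \<alpha> = (nG / Mx) powr (1 - p/q)" using Mp nGp by (simp add: t_def powr_powr ex)
      also have "\<dots> = nG powr (1 - p/q) / Mx powr (1 - p/q)" using Mp nGp by (simp add: powr_divide)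
      finally have "t powr \<alpha> * Mx = nG powr (1 - p/q) * (Mx / Mx powr (1 - p/q))" by simp
      also have "Mx / Mx powr (1 - p/q) = Mx powr (p/q)"
        using Mp powr_diff[of Mx 1 "1 - p/q"] by simp
      finally show ?thesis by simp
    qed
    have e2: "t powr (-1/q) * nG = Mx powr (p/q) * nG powr (1 - p/q)"
    proof -
      have "t powr (-1/q) = (nG / Mx) powr (- (p/q))" using Mp nGp by (simp add: t_def powr_powr)
      also have "\<dots> = Mx powr (p/q) / nG powr (p/q)" using Mp nGp
        by (simp add: powr_divide powr_minus_divide)
      finally have "t powr (-1/q) * nG = Mx powr (p/q) * (nG / nG powr (p/q))" by simp
      also have "nG / nG powr (p/q) = nG powr (1 - p/q)"
        using nGp powr_diff[of nG 1 "p/q"] by simp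
      finally show ?thesis .
    qed
    have "S \<le> K1 * (t powr \<alpha> * Mx) + K2 * (t powr (-1/q) * nG)" using ct[OF tp] by (simp add: mult.assoc)
    also have "\<dots> = (K1 + K2) * Mx powr (p/q) * nG powr (1 - p/q)" unfolding e1 e2 by (simp add: algebra_simps)
    finally show ?thesis by (simp add: S_def K1_def K2_def nG_def)
  next
    case True
    have "S \<le> 0"
    proof (rule ccontr)
      assume "\<not> S \<le> 0"
      then have Sp: "0 < S" by simp
      show False using True
      proof
        assume Mz: "Mx = 0"
        have "0 \<le> K2 * nG" using K2 nG0 by simp
        then have kp: "0 < K2 * nG + 1" by linarith
        define t where "t = ((K2 * nG + 1) / S) powr q"
        have tp: "0 < t" using kp Sp by (simp add: t_def)
        have "t powr (-1/q) = S / (K2 * nG + 1)"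
        proof -
          have "t powr (-1/q) = ((K2 * nG + 1) / S) powr (q * (-1/q))" using kp Sp
            by (simp add: t_def powr_powr)
          also have "q * (-1/q) = -1" using par by simp
          finally have "t powr (-1/q) = ((K2 * nG + 1) / S) powr (-1)" .
          then show ?thesis using kp Sp by simp
        qed
        then have "S \<le> K2 * (S / (K2 * nG + 1)) * nG" using ct[OF tp] Mz by simp
        also have "\<dots> = S * (K2 * nG / (K2 * nG + 1))" using kp by (simp add: field_simps)
        also have "\<dots> < S * 1" using Sp K2 nG0 by (intro mult_strict_left_mono) (auto simp: add_nonneg_pos)
        finally show False by simp
      next
        assume nz: "nG = 0"
        have "0 \<le> K1 * Mx" using K1 Mx0 by simp
        then have kp: "0 < K1 * Mx + 1" by linarith
        define t where "t = (S / (K1 * Mx + 1)) powr (1/\<alpha>)"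
        have tp: "0 < t" using kp Sp by (simp add: t_def)
        have "t powr \<alpha> = S / (K1 * Mx + 1)" using kp Sp par by (simp add: t_def powr_powr)
        then have "S \<le> K1 * (S / (K1 * Mx + 1)) * Mx" using ct[OF tp] nz by simp
        also have "\<dots> = S * (K1 * Mx / (K1 * Mx + 1))" using kp by (simp add: field_simps)
        also have "\<dots> < S * 1" using Sp K1 Mx0 by (intro mult_strict_left_mono) (auto simp: add_nonneg_pos)
        finally show False by simp
      qed
    qed
    moreover have "0 \<le> ((3 + 2 / \<alpha>) + (q + (p / (p - 1) / q) powr (-(1 - 1/p))))
            * Mx powr (p/q) * nG powr (1 - p/q)" using K1 K2 by (simp add: K1_def K2_def)
    ultimately show ?thesis by (simp add: S_def nG_def)
  qed
qed

locale atomfilt =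
  fixes M :: "'a measure" and F :: "nat \<Rightarrow> 'a measure" and A :: "nat \<Rightarrow> 'a set set"
  assumes prob: "prob_space M"
    and sub: "\<And>n. subalgebra M (F n)"
    and fmono: "\<And>n m. n \<le> m \<Longrightarrow> sets (F n) \<subseteq> sets (F m)"
    and cnt: "\<And>n. countable (A n)"
    and disj: "\<And>n. disjoint (A n)"
    and cover: "\<And>n. \<Union>(A n) = space M"
    and atom: "\<And>n w. w \<in> A n \<Longrightarrow> is_atom M (F n) w"
    and gen: "\<And>n. sets (F n) = sigma_sets (space M) (A n)"
begin

sublocale prob_space M by (rule prob)

lemma spaceF: "space (F n) = space M" using sub[of n] by (simp add: subalgebra_def)

lemma A_setsF: "w \<in> A n \<Longrightarrow> w \<in> sets (F n)"
  using atom[of w n] by (simp add: is_atom_def)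

lemma A_sets: "w \<in> A n \<Longrightarrow> w \<in> sets M"
  using A_setsF sub[of n] by (auto simp: subalgebra_def)

lemma A_pos: "w \<in> A n \<Longrightarrow> 0 < measure M w"
  using atom[of w n] by (simp add: is_atom_def)

lemma A_sub: "w \<in> A n \<Longrightarrow> w \<subseteq> space M"
  using cover[of n] by blast

lemma dichotomy:
  assumes "S \<in> sets (F n)" "w \<in> A n"
  shows "w \<subseteq> S \<or> w \<inter> S = {}"
proof -
  have "S \<in> sigma_sets (space M) (A n)" using assms(1) gen by simp
  then show ?thesis
  proof induction
    case (Basic a)
    then show ?case using disj[of n] assms(2) unfolding disjoint_def by blast
  next
    case Empty
    then show ?case by simp
  next
    case (Compl a)
    then show ?case using A_sub[OF assms(2)] by blast
  next
    case (Union a)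
    then show ?case by blast
  qed
qed

definition om :: "nat \<Rightarrow> 'a \<Rightarrow> 'a set" where
  "om n x = (THE w. w \<in> A n \<and> x \<in> w)"

lemma om_ex1: assumes "x \<in> space M" shows "\<exists>!w. w \<in> A n \<and> x \<in> w"
proof -
  have "x \<in> \<Union>(A n)" using cover[of n] assms by simp
  then obtain w where w: "w \<in> A n" "x \<in> w" by (rule UnionE)
  show ?thesis
  proof (rule ex1I[of _ w])
    show "w \<in> A n \<and> x \<in> w" using w by simp
    fix w' assume w': "w' \<in> A n \<and> x \<in> w'"
    show "w' = w"
    proof (rule ccontr)
      assume "w' \<noteq> w"
      then have "w' \<inter> w = {}" using disj[of n] w(1) w' unfolding disjoint_def by blast
      then show False using w w' by blast
    qed
  qed
qed

lemma om: assumes "x \<in> space M" shows "om n x \<in> A n" "x \<in> om n x"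
  using theI'[OF om_ex1[OF assms, of n]] by (auto simp: om_def)

lemma om_unique: assumes "w \<in> A n" "x \<in> w" shows "om n x = w"
proof -
  have xs: "x \<in> space M" using A_sub[OF assms(1)] assms(2) by blast
  show ?thesis unfolding om_def by (rule the1_equality[OF om_ex1[OF xs]]) (use assms in simp)
qed

lemma om_sets: "x \<in> space M \<Longrightarrow> om n x \<in> sets M"
  using om(1) A_sets by blast

lemma om_setsF: "x \<in> space M \<Longrightarrow> om n x \<in> sets (F n)"
  using om(1) A_setsF by blast

lemma om_pos: "x \<in> space M \<Longrightarrow> 0 < measure M (om n x)"
  using om(1) A_pos by blast

lemma om_sub: "x \<in> space M \<Longrightarrow> om n x \<subseteq> space M"
  using om(1) A_sub by blast

lemma om_refine:
  assumes "x \<in> space M" "n \<le> k" shows "om k x \<subseteq> om n x"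
proof -
  have "om n x \<in> sets (F k)" using om_setsF[OF assms(1)] fmono[OF assms(2)] by blast
  then have "om k x \<subseteq> om n x \<or> om k x \<inter> om n x = {}" using dichotomy om(1)[OF assms(1)] by blast
  then show ?thesis using om(2)[OF assms(1), of k] om(2)[OF assms(1), of n] by blast
qed

lemma om_same: "x \<in> space M \<Longrightarrow> y \<in> om n x \<Longrightarrow> om n y = om n x"
  by (rule om_unique[OF om(1)])

lemma const_on_atom:
  assumes f: "f \<in> borel_measurable (F n)" and x: "x \<in> space M" and y: "y \<in> om n x"
  shows "f y = (f x :: real)"
proof -
  have "f -` {f x} \<inter> space (F n) \<in> sets (F n)" using f by (intro measurable_sets) auto
  then have S: "{z \<in> space M. f z = f x} \<in> sets (F n)" using spaceF by (simp add: vimage_def Int_def conj_commute)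
  have "om n x \<subseteq> {z \<in> space M. f z = f x} \<or> om n x \<inter> {z \<in> space M. f z = f x} = {}"
    by (rule dichotomy[OF S om(1)[OF x]])
  then show ?thesis using om[OF x] x y by blast
qed

lemma measurable_atomfun:
  assumes "\<And>x. x \<in> space M \<Longrightarrow> f x = g (om n x)"
  shows "(f :: 'a \<Rightarrow> real) \<in> borel_measurable (F n)"
proof (rule measurableI)
  fix B :: "real set" assume "B \<in> sets borel"
  have eq: "f -` B \<inter> space (F n) = \<Union>{w \<in> A n. g w \<in> B}"
  proof
    show "f -` B \<inter> space (F n) \<subseteq> \<Union>{w \<in> A n. g w \<in> B}"
    proof
      fix y assume y: "y \<in> f -` B \<inter> space (F n)"
      then have ys: "y \<in> space M" using spaceF by simp
      have "g (om n y) \<in> B" using y assms[OF ys] by simp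
      then show "y \<in> \<Union>{w \<in> A n. g w \<in> B}" using om[OF ys] by blast
    qed
    show "\<Union>{w \<in> A n. g w \<in> B} \<subseteq> f -` B \<inter> space (F n)"
    proof
      fix y assume "y \<in> \<Union>{w \<in> A n. g w \<in> B}"
      then obtain w where w: "w \<in> A n" "g w \<in> B" "y \<in> w" by blast
      have ys: "y \<in> space M" using A_sub[OF w(1)] w(3) by blast
      have "om n y = w" using om_unique w by blast
      then show "y \<in> f -` B \<inter> space (F n)" using assms[OF ys] w ys spaceF by simp
    qed
  qed
  show "f -` B \<inter> space (F n) \<in> sets (F n)" unfolding eq
    using cnt[of n] A_setsF by (intro sets.countable_Union) auto
qed auto

lemma cond_exp_formula:
  assumes f: "integrable M f" and x: "x \<in> space M"
  shows "real_cond_exp M (F n) f x = (\<integral>y. indicator (om n x) y * f y \<partial>M) / measure M (om n x)"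
proof -
  interpret fms: finite_measure_subalgebra M "F n"
    by unfold_locales (rule sub)
  define c where "c = real_cond_exp M (F n) f x"
  have cst: "real_cond_exp M (F n) f y = c" if "y \<in> om n x" for y
    unfolding c_def using const_on_atom[OF borel_measurable_cond_exp x that] .
  have "(\<integral>y. indicator (om n x) y * f y \<partial>M) = (\<integral>y \<in> om n x. f y \<partial>M)"
    by (simp add: set_lebesgue_integral_def)
  also have "\<dots> = (\<integral>y \<in> om n x. real_cond_exp M (F n) f y \<partial>M)"
    by (rule fms.real_cond_exp_intA[OF f om_setsF[OF x]])
  also have "\<dots> = (\<integral>y. indicator (om n x) y * c \<partial>M)"
    unfolding set_lebesgue_integral_def
    by (intro Bochner_Integration.integral_cong refl) (auto simp: cst indicator_def)
  also have "\<dots> = c * measure M (om n x)"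
    using om_sets[OF x] by simp
  finally show ?thesis using om_pos[OF x, of n] by (simp add: c_def)
qed

lemma bfun_eq:
  assumes x: "x \<in> space M"
  shows "bfun M A n x = measure M (om n x)"
proof -
  have "bfun M A n x = infsum (\<lambda>w. measure M w * indicator w x) {om n x}"
    unfolding bfun_def
  proof (rule infsum_cong_neutral)
    fix w assume "w \<in> A n - {om n x}"
    then have "x \<notin> w" using om_unique[of w _ x] by auto
    then show "measure M w * indicator w x = 0" by simp
  qed (use om[OF x] in auto)
  then show ?thesis using om[OF x] by simp
qed

lemma btilde_eq:
  assumes x: "x \<in> space M"
  shows "btilde M A n x = (INF y\<in>om (n - 1) x. bfun M A n y)"
proof -
  have "btilde M A n x = infsum (\<lambda>\<omega>. indicator \<omega> x * (INF y\<in>\<omega>. bfun M A n y)) {om (n - 1) x}"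
    unfolding btilde_def
  proof (rule infsum_cong_neutral)
    fix w assume "w \<in> A (n - 1) - {om (n - 1) x}"
    then have "x \<notin> w" using om_unique[of w _ x] by auto
    then show "indicator w x * (INF y\<in>w. bfun M A n y) = 0" by simp
  qed (use om[OF x] in auto)
  then show ?thesis using om[OF x] by simp
qed

lemma btilde_bounds:
  assumes x: "x \<in> space M"
  shows "0 \<le> btilde M A n x" "btilde M A n x \<le> measure M (om n x)"
proof -
  have ne: "om (n - 1) x \<noteq> {}" using om(2)[OF x] by blast
  have nn: "0 \<le> bfun M A n y" if "y \<in> om (n - 1) x" for y
    using bfun_eq[of y n] om_sub[OF x, of "n - 1"] that by auto
  have bdd: "bdd_below ((\<lambda>y. bfun M A n y) ` om (n - 1) x)" using nn by (intro bdd_belowI2[where m=0]) auto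
  show "0 \<le> btilde M A n x" unfolding btilde_eq[OF x] using ne nn by (intro cINF_greatest) auto
  have "(INF y\<in>om (n - 1) x. bfun M A n y) \<le> bfun M A n x"
    using bdd om(2)[OF x] by (intro cINF_lower) auto
  then show "btilde M A n x \<le> measure M (om n x)" using bfun_eq[OF x] btilde_eq[OF x] by simp
qed

lemma bfun_meas: "bfun M A n \<in> borel_measurable M"
proof -
  have "bfun M A n \<in> borel_measurable (F n)"
    by (rule measurable_atomfun[where g="\<lambda>w. measure M w"]) (rule bfun_eq)
  then show ?thesis by (rule measurable_from_subalg[OF sub])
qed

lemma btilde_meas: "btilde M A n \<in> borel_measurable M"
proof -
  have "btilde M A n \<in> borel_measurable (F (n - 1))"
  proof (rule measurable_atomfun[where g="\<lambda>w. INF y\<in>w. bfun M A n y"])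
    fix x assume "x \<in> space M" then show "btilde M A n x = (INF y\<in>om (n - 1) x. bfun M A n y)"
      by (rule btilde_eq)
  qed
  then show ?thesis by (rule measurable_from_subalg[OF sub])
qed

end

lemma young_pp:
  fixes a c p :: real assumes "1 < p" "0 \<le> a" "0 \<le> c"
  shows "a powr (p - 1) * c \<le> (p - 1) / p * a powr p + c powr p / p"
proof -
  define P where "P = p / (p - 1)"
  have P: "1 < P" "1/P + 1/p = 1" using assms by (auto simp: P_def field_simps)
  have "a powr (p - 1) * c \<le> (a powr (p - 1)) powr P / P + c powr p / p"
    using Youngs_inequality[OF P(1) assms(1) P(2)] assms by simp
  also have "(a powr (p - 1)) powr P = a powr p"
    using assms by (simp add: powr_powr P_def)
  also have "a powr p / P = (p - 1) / p * a powr p" by (simp add: P_def)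
  finally show ?thesis .
qed

lemma eps_young:
  fixes a b p e :: real assumes "1 < p" "0 \<le> a" "0 \<le> b" "0 < e"
  shows "a powr (p - 1) * b \<le> e * a powr p + e powr (1 - p) * b powr p"
proof (cases "b \<le> e * a")
  case True
  have "a powr (p - 1) * b \<le> a powr (p - 1) * (e * a)" using True assms by (intro mult_left_mono) auto
  also have "\<dots> = e * (a powr (p - 1) * a)" by simp
  also have "a powr (p - 1) * a = a powr p"
    using assms powr_mult_base[of a "p - 1"] by (simp add: mult.commute)
  finally show ?thesis using assms by (simp add: add_increasing2)
next
  case False
  then have "a \<le> b / e" using assms by (simp add: field_simps)
  then have "a powr (p - 1) \<le> (b / e) powr (p - 1)" using assms by (intro powr_mono2) auto
  then have "a powr (p - 1) * b \<le> (b / e) powr (p - 1) * b" using assms by (intro mult_right_mono) auto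
  also have "\<dots> = e powr (1 - p) * (b powr (p - 1) * b)"
    using assms by (simp add: powr_divide powr_diff divide_simps)
  also have "b powr (p - 1) * b = b powr p"
    using assms powr_mult_base[of b "p - 1"] by (simp add: mult.commute)
  finally show ?thesis using assms by (simp add: add_increasing)
qed

lemma pathwise_doob:
  fixes x :: "nat \<Rightarrow> real" and p :: real
  assumes p: "1 < p" and x0: "\<And>k. 0 \<le> x k"
  shows "(Max (x ` {0..N})) powr p \<le> p / (p - 1) * ((Max (x ` {0..N})) powr (p - 1) * x N
           - (\<Sum>n<N. (Max (x ` {0..n})) powr (p - 1) * (x (Suc n) - x n)))"
proof -
  define xb where "xb n = Max (x ` {0..n})" for n
  define S where "S N = xb N powr (p - 1) * x N - (\<Sum>n<N. xb n powr (p - 1) * (x (Suc n) - x n))" for N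
  have pp: "a powr (p - 1) * a = a powr p" if "0 \<le> a" for a :: real
    using that powr_mult_base[of a "p - 1"] by (simp add: mult.commute)
  have xbS: "xb (Suc n) = max (x (Suc n)) (xb n)" for n
  proof -
    have "{0..Suc n} = insert (Suc n) {0..n}" by auto
    then show ?thesis by (simp add: xb_def Max_insert)
  qed
  have xb0: "0 \<le> xb n" for n using x0[of 0] by (auto simp: xb_def Max_ge_iff intro!: bexI[where x=0])
  have claim: "xb N powr p / (p / (p - 1)) \<le> S N"
  proof (induction N)
    case 0
    have "xb 0 = x 0" by (simp add: xb_def)
    then have "S 0 = xb 0 powr p" using pp x0 by (simp add: S_def)
    moreover have "xb 0 powr p / (p / (p - 1)) \<le> xb 0 powr p"
      using p by (simp add: divide_le_eq field_simps)
    ultimately show ?case by simp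
  next
    case (Suc N)
    have SS: "S (Suc N) = S N + (xb (Suc N) powr (p - 1) - xb N powr (p - 1)) * x (Suc N)"
      by (simp add: S_def algebra_simps)
    show ?case
    proof (cases "x (Suc N) \<le> xb N")
      case True
      then have "xb (Suc N) = xb N" using xbS by simp
      then show ?thesis using Suc SS by simp
    next
      case False
      define a where "a = xb N"
      define c where "c = x (Suc N)"
      have ac: "0 \<le> a" "a \<le> c" "0 \<le> c" using False xb0 x0 by (auto simp: a_def c_def)
      have xbc: "xb (Suc N) = c" using xbS False by (simp add: c_def)
      have key: "(c powr p - a powr p) / (p / (p - 1)) \<le> (c powr (p - 1) - a powr (p - 1)) * c"
      proof -
        have y: "a powr (p - 1) * c \<le> (p - 1) / p * a powr p + c powr p / p" by (rule young_pp[OF p ac(1) ac(3)])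
        have "(c powr (p - 1) - a powr (p - 1)) * c = c powr p - a powr (p - 1) * c"
          using pp[OF ac(3)] by (simp add: algebra_simps)
        moreover have "(c powr p - a powr p) / (p / (p - 1)) = (p - 1) / p * c powr p - (p - 1) / p * a powr p"
          using p by (simp add: field_simps)
        moreover have "c powr p = (p - 1) / p * c powr p + c powr p / p" using p by (simp add: field_simps)
        ultimately show ?thesis using y by linarith
      qed
      have "xb (Suc N) powr p / (p / (p - 1)) = a powr p / (p / (p - 1)) + (c powr p - a powr p) / (p / (p - 1))"
        using xbc by (simp only: add_divide_distrib[symmetric]) simp
      also have "\<dots> \<le> S N + (c powr (p - 1) - a powr (p - 1)) * c" using Suc key by (simp add: a_def)
      also have "\<dots> = S (Suc N)" using SS xbc by (simp add: a_def c_def)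
      finally show ?thesis .
    qed
  qed
  then have "xb N powr p \<le> p / (p - 1) * S N" using p by (simp add: field_simps)
  then show ?thesis by (simp add: S_def xb_def)
qed

context atomfilt begin

lemma subalg_FF: "k \<le> n \<Longrightarrow> subalgebra (F n) (F k)"
  unfolding subalgebra_def using fmono spaceF by auto

lemma meas_FF: "k \<le> n \<Longrightarrow> f \<in> borel_measurable (F k) \<Longrightarrow> f \<in> borel_measurable (F n)"
  using measurable_from_subalg[OF subalg_FF] .

lemma measM: "f \<in> borel_measurable (F k) \<Longrightarrow> f \<in> borel_measurable M"
  using measurable_from_subalg[OF sub] .

lemma avg_powr_le:
  fixes G :: "'a \<Rightarrow> real"
  assumes Gm[measurable]: "G \<in> borel_measurable M" and Gp: "integrable M (\<lambda>y. \<bar>G y\<bar> powr p)"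
    and p: "1 < p" and x: "x \<in> space M"
  shows "((\<integral>y. indicator (om n x) y * \<bar>G y\<bar> \<partial>M) / measure M (om n x)) powr p
         \<le> (\<integral>y. indicator (om n x) y * \<bar>G y\<bar> powr p \<partial>M) / measure M (om n x)"
proof -
  define W where "W = om n x"
  define P where "P = measure M W"
  define pc where "pc = p / (p - 1)"
  have pc: "1/p + 1/pc = 1" "1 < pc" "p / pc = p - 1" using p by (auto simp: pc_def field_simps)
  have Wm: "W \<in> sets M" using om_sets[OF x] by (simp add: W_def)
  have Pp: "0 < P" using om_pos[OF x] by (simp add: P_def W_def)
  define I where "I = (\<integral>y. indicator W y * \<bar>G y\<bar> \<partial>M)"
  define J where "J = (\<integral>y. indicator W y * \<bar>G y\<bar> powr p \<partial>M)"
  have indp: "indicator W y powr r = (indicator W y :: real)" if "0 < r" for y and r :: real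
    using that by (simp add: indicator_def)
  have e1: "(indicator W y * \<bar>G y\<bar>) powr p = indicator W y * \<bar>G y\<bar> powr p" for y
    using p by (simp add: indicator_def)
  have I0: "0 \<le> I" by (simp add: I_def)
  have J0: "0 \<le> J" by (simp add: J_def)
  have "(\<integral>y. (indicator W y * \<bar>G y\<bar>) * indicator W y \<partial>M)
      \<le> (\<integral>y. (indicator W y * \<bar>G y\<bar>) powr p \<partial>M) powr (1/p) * (\<integral>y. indicator W y powr pc \<partial>M) powr (1/pc)"
  proof (rule holder[OF p pc(1)])
    show "integrable M (\<lambda>y. (indicator W y * \<bar>G y\<bar>) powr p)" unfolding e1
      using integrable_mult_indicator[OF Wm Gp] by simp
    show "integrable M (\<lambda>y. indicator W y powr pc)" using pc Wm
      by (simp add: indp less_top[symmetric])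
  qed (use Wm in auto)
  also have "(\<integral>y. (indicator W y * \<bar>G y\<bar>) * indicator W y \<partial>M) = I"
    unfolding I_def by (intro Bochner_Integration.integral_cong) (auto simp: indicator_def)
  also have "(\<integral>y. (indicator W y * \<bar>G y\<bar>) powr p \<partial>M) = J" unfolding J_def e1 ..
  also have "(\<integral>y. indicator W y powr pc \<partial>M) = P" using pc Wm by (simp add: indp P_def)
  finally have IJ: "I \<le> J powr (1/p) * P powr (1/pc)" .
  have "(I / P) powr p \<le> (J powr (1/p) * P powr (1/pc) / P) powr p"
    using IJ I0 Pp p by (intro powr_mono2 divide_right_mono) auto
  also have "\<dots> = J * P powr (p / pc) / P powr p"
    using J0 Pp p by (simp add: powr_divide powr_mult powr_powr)
  also have "\<dots> = J / P"
    using Pp pc(3) by (simp add: powr_diff[symmetric] powr_minus_divide) (simp add: powr_diff)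
  finally show ?thesis by (simp add: I_def J_def P_def W_def)
qed

lemma doob:
  fixes G :: "'a \<Rightarrow> real"
  assumes Gm[measurable]: "G \<in> borel_measurable M" and Gp: "integrable M (\<lambda>y. \<bar>G y\<bar> powr p)"
    and p: "1 < p" and GN: "G \<in> borel_measurable (F N)"
  shows "integrable M (\<lambda>x. Max ((\<lambda>k. real_cond_exp M (F k) (\<lambda>y. \<bar>G y\<bar>) x) ` {0..N}) powr p)"
    "(\<integral>x. Max ((\<lambda>k. real_cond_exp M (F k) (\<lambda>y. \<bar>G y\<bar>) x) ` {0..N}) powr p \<partial>M)
       \<le> (2 * (p / (p - 1))) powr p * (\<integral>x. \<bar>G x\<bar> powr p \<partial>M)"
proof -
  define X where "X k x = real_cond_exp M (F k) (\<lambda>y. \<bar>G y\<bar>) x" for k x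
  define Xb where "Xb n x = Max ((\<lambda>k. X k x) ` {0..n})" for n x
  have Gi: "integrable M G" using Lp_integrable[OF prob Gm _ Gp] p by simp
  have aG: "integrable M (\<lambda>y. \<bar>G y\<bar>)" using Gi by simp
  have Xf: "X k x = (\<integral>y. indicator (om k x) y * \<bar>G y\<bar> \<partial>M) / measure M (om k x)" if "x \<in> space M" for k x
    unfolding X_def by (rule cond_exp_formula[OF aG that])
  have X0: "0 \<le> X k x" if "x \<in> space M" for k x
    using Xf[OF that] om_pos[OF that] by simp
  have XmF: "X k \<in> borel_measurable (F k)" for k unfolding X_def by (rule borel_measurable_cond_exp)
  have Xm[measurable]: "X k \<in> borel_measurable M" for k using measM[OF XmF] .
  have Xp: "X k x powr p \<le> real_cond_exp M (F k) (\<lambda>y. \<bar>G y\<bar> powr p) x" if "x \<in> space M" for k x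
  proof -
    have "X k x powr p \<le> (\<integral>y. indicator (om k x) y * \<bar>G y\<bar> powr p \<partial>M) / measure M (om k x)"
      unfolding Xf[OF that] by (rule avg_powr_le[OF Gm Gp p that])
    also have "\<dots> = real_cond_exp M (F k) (\<lambda>y. \<bar>G y\<bar> powr p) x"
      by (rule cond_exp_formula[OF Gp that, symmetric])
    finally show ?thesis .
  qed
  have XpI: "integrable M (\<lambda>x. X k x powr p)" for k
  proof -
    interpret fms: finite_measure_subalgebra M "F k" by unfold_locales (rule sub)
    show ?thesis
    proof (rule Bochner_Integration.integrable_bound[OF fms.real_cond_exp_int(1)[OF Gp]])
      show "AE x in M. norm (X k x powr p) \<le> norm (real_cond_exp M (F k) (\<lambda>y. \<bar>G y\<bar> powr p) x)"
        using Xp by (intro AE_I2) (auto intro: order_trans[OF _ abs_ge_self])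
    qed simp
  qed
  have XbmF: "Xb n \<in> borel_measurable (F n)" for n
    unfolding Xb_def by (intro borel_measurable_Max meas_FF[OF _ XmF]) auto
  have Xbm[measurable]: "Xb n \<in> borel_measurable M" for n using measM[OF XbmF] .
  have Xb0: "0 \<le> Xb n x" if "x \<in> space M" for n x
    using X0[OF that, of 0] by (auto simp: Xb_def Max_ge_iff intro!: bexI[where x=0])
  have XbpI: "integrable M (\<lambda>x. Xb n x powr p)" for n
  proof (rule Bochner_Integration.integrable_bound[where f="\<lambda>x. \<Sum>k\<in>{0..n}. X k x powr p"])
    show "integrable M (\<lambda>x. \<Sum>k\<in>{0..n}. X k x powr p)" using XpI by auto
    show "AE x in M. norm (Xb n x powr p) \<le> norm (\<Sum>k\<in>{0..n}. X k x powr p)"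
    proof (intro AE_I2)
      fix x assume x: "x \<in> space M"
      have "Xb n x \<in> (\<lambda>k. X k x) ` {0..n}" unfolding Xb_def by (rule Max_in) auto
      then obtain j where j: "j \<in> {0..n}" "Xb n x = X j x" by blast
      have "X j x powr p \<le> (\<Sum>k\<in>{0..n}. X k x powr p)"
        using j(1) by (intro member_le_sum) auto
      then show "norm (Xb n x powr p) \<le> norm (\<Sum>k\<in>{0..n}. X k x powr p)" using j(2) by simp
    qed
  qed simp
  have XN: "X N x = \<bar>G x\<bar>" if x: "x \<in> space M" for x
  proof -
    have aGN: "(\<lambda>y. \<bar>G y\<bar>) \<in> borel_measurable (F N)" using GN by measurable
    have "(\<integral>y. indicator (om N x) y * \<bar>G y\<bar> \<partial>M) = (\<integral>y. indicator (om N x) y * \<bar>G x\<bar> \<partial>M)"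
      using const_on_atom[OF aGN x] by (intro Bochner_Integration.integral_cong) (auto simp: indicator_def)
    also have "\<dots> = \<bar>G x\<bar> * measure M (om N x)" using om_sets[OF x] by simp
    finally show ?thesis using Xf[OF x] om_pos[OF x, of N] by simp
  qed
  have prodI: "integrable M (\<lambda>x. Xb n x powr (p - 1) * X j x)" for n j
  proof (rule Bochner_Integration.integrable_bound[where f="\<lambda>x. Xb n x powr p + X j x powr p"])
    show "integrable M (\<lambda>x. Xb n x powr p + X j x powr p)" using XbpI XpI by auto
    show "AE x in M. norm (Xb n x powr (p - 1) * X j x) \<le> norm (Xb n x powr p + X j x powr p)"
    proof (intro AE_I2)
      fix x assume x: "x \<in> space M"
      have "Xb n x powr (p - 1) * X j x \<le> (p - 1) / p * Xb n x powr p + X j x powr p / p"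
        by (rule young_pp[OF p Xb0[OF x] X0[OF x]])
      also have "\<dots> \<le> Xb n x powr p + X j x powr p"
      proof -
        have A0: "0 \<le> Xb n x powr p" "0 \<le> X j x powr p" by simp_all
        have "(p - 1) / p * Xb n x powr p \<le> Xb n x powr p" using p A0 by (simp add: divide_le_eq algebra_simps)
        moreover have "X j x powr p / p \<le> X j x powr p"
          using p A0 mult_right_mono[of 1 p "X j x powr p"] by (simp add: divide_le_eq algebra_simps)
        ultimately show ?thesis by linarith
      qed
      finally show "norm (Xb n x powr (p - 1) * X j x) \<le> norm (Xb n x powr p + X j x powr p)"
        using Xb0[OF x] X0[OF x] by simp
    qed
  qed simp
  have mart: "(\<integral>x. Xb n x powr (p - 1) * X (Suc n) x \<partial>M) = (\<integral>x. Xb n x powr (p - 1) * X n x \<partial>M)" for n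
  proof -
    interpret fms: finite_measure_subalgebra M "F n" by unfold_locales (rule sub)
    interpret fms': finite_measure_subalgebra M "F (Suc n)" by unfold_locales (rule sub)
    have hm: "(\<lambda>x. Xb n x powr (p - 1)) \<in> borel_measurable (F n)" using XbmF[of n] by measurable
    have XSi: "integrable M (X (Suc n))" unfolding X_def by (rule fms'.real_cond_exp_int(1)[OF aG])
    have ce: "real_cond_exp M (F n) (X (Suc n)) x = X n x" if x: "x \<in> space M" for x
    proof -
      have "(\<integral>y. indicator (om n x) y * X (Suc n) y \<partial>M) = (\<integral>y \<in> om n x. real_cond_exp M (F (Suc n)) (\<lambda>y. \<bar>G y\<bar>) y \<partial>M)"
        by (simp add: set_lebesgue_integral_def X_def)
      also have "\<dots> = (\<integral>y \<in> om n x. \<bar>G y\<bar> \<partial>M)"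
        using om_setsF[OF x, of n] fmono[of n "Suc n"]
        by (intro fms'.real_cond_exp_intA[symmetric, OF aG]) auto
      also have "\<dots> = (\<integral>y. indicator (om n x) y * \<bar>G y\<bar> \<partial>M)" by (simp add: set_lebesgue_integral_def)
      finally have "(\<integral>y. indicator (om n x) y * X (Suc n) y \<partial>M) = (\<integral>y. indicator (om n x) y * \<bar>G y\<bar> \<partial>M)" .
      then show ?thesis using cond_exp_formula[OF XSi x, of n] Xf[OF x, of n] by simp
    qed
    have "(\<integral>x. Xb n x powr (p - 1) * X (Suc n) x \<partial>M)
        = (\<integral>x. Xb n x powr (p - 1) * real_cond_exp M (F n) (X (Suc n)) x \<partial>M)"
      by (rule fms.real_cond_exp_intg(2)[OF prodI hm Xm, symmetric])
    also have "\<dots> = (\<integral>x. Xb n x powr (p - 1) * X n x \<partial>M)"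
      using ce by (intro Bochner_Integration.integral_cong) auto
    finally show ?thesis .
  qed
  define qs where "qs = p / (p - 1)"
  have qs: "1 < qs" using p by (simp add: qs_def)
  define R where "R x = qs * (Xb N x powr (p - 1) * X N x
      - (\<Sum>n<N. Xb n x powr (p - 1) * X (Suc n) x - Xb n x powr (p - 1) * X n x))" for x
  have pw: "Xb N x powr p \<le> R x" if x: "x \<in> space M" for x
    using pathwise_doob[OF p, of "\<lambda>k. X k x" N] X0[OF x]
    by (simp add: R_def Xb_def qs_def right_diff_distrib)
  have RI: "integrable M R" unfolding R_def using prodI by auto
  have intR: "(\<integral>x. R x \<partial>M) = qs * (\<integral>x. Xb N x powr (p - 1) * X N x \<partial>M)"
  proof -
    have "(\<integral>x. R x \<partial>M) = qs * ((\<integral>x. Xb N x powr (p - 1) * X N x \<partial>M)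
        - (\<Sum>n<N. (\<integral>x. Xb n x powr (p - 1) * X (Suc n) x \<partial>M) - (\<integral>x. Xb n x powr (p - 1) * X n x \<partial>M)))"
      unfolding R_def using prodI
      by (simp add: Bochner_Integration.integral_diff Bochner_Integration.integral_sum)
    then show ?thesis using mart by simp
  qed
  define e where "e = 1 / (2 * qs)"
  have e: "0 < e" "qs * e = 1/2" using qs by (auto simp: e_def)
  have eps: "Xb N x powr (p - 1) * X N x \<le> e * Xb N x powr p + e powr (1 - p) * \<bar>G x\<bar> powr p"
    if x: "x \<in> space M" for x
    using eps_young[OF p Xb0[OF x, of N] X0[OF x, of N] e(1)] XN[OF x] by simp
  define I where "I = (\<integral>x. Xb N x powr p \<partial>M)"
  define J where "J = (\<integral>x. \<bar>G x\<bar> powr p \<partial>M)"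
  have "I \<le> (\<integral>x. R x \<partial>M)" unfolding I_def using pw XbpI RI by (intro integral_mono) auto
  also have "\<dots> \<le> qs * (\<integral>x. e * Xb N x powr p + e powr (1 - p) * \<bar>G x\<bar> powr p \<partial>M)"
    unfolding intR using eps prodI XbpI Gp qs by (intro mult_left_mono integral_mono) auto
  also have "\<dots> = qs * e * I + qs * e powr (1 - p) * J"
    using XbpI Gp by (simp add: I_def J_def algebra_simps)
  finally have "I \<le> I / 2 + qs * e powr (1 - p) * J" using e by simp
  then have "I \<le> 2 * qs * e powr (1 - p) * J" by simp
  also have "2 * qs * e powr (1 - p) = (2 * qs) powr p"
  proof -
    have "e powr (1 - p) = (2 * qs) powr (p - 1)" using qs
      by (simp add: e_def powr_divide powr_minus_divide[symmetric])
    then show ?thesis using qs powr_add[of "2 * qs" 1 "p - 1"] by simp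
  qed
  finally show "(\<integral>x. Max ((\<lambda>k. real_cond_exp M (F k) (\<lambda>y. \<bar>G y\<bar>) x) ` {0..N}) powr p \<partial>M)
       \<le> (2 * (p / (p - 1))) powr p * (\<integral>x. \<bar>G x\<bar> powr p \<partial>M)"
    by (simp add: I_def J_def Xb_def X_def qs_def)
  show "integrable M (\<lambda>x. Max ((\<lambda>k. real_cond_exp M (F k) (\<lambda>y. \<bar>G y\<bar>) x) ` {0..N}) powr p)"
    using XbpI[of N] by (simp add: Xb_def X_def)
qed

end

context atomfilt begin

lemma op_bound:
  fixes G :: "'a \<Rightarrow> real" and mf :: "nat \<Rightarrow> 'a \<Rightarrow> real"
  assumes par: "0 < \<alpha>" "\<alpha> < 1" "1 < p" "p < q" "1/p - 1/q = \<alpha>"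
    and GN: "G \<in> borel_measurable (F N)" and Gp: "integrable M (\<lambda>x. \<bar>G x\<bar> powr p)"
    and mfm[measurable]: "\<And>n. mf n \<in> borel_measurable M"
    and mfb: "\<And>n x. x \<in> space M \<Longrightarrow> 1 \<le> n \<Longrightarrow> 0 \<le> mf n x \<and> mf n x \<le> measure M (om n x)"
  shows "integrable M (\<lambda>x. \<bar>\<Sum>n\<in>{1..N}. mf n x powr \<alpha> * mdiff M F G n x\<bar> powr q)
    \<and> Lnorm M q (\<lambda>x. \<Sum>n\<in>{1..N}. mf n x powr \<alpha> * mdiff M F G n x)
       \<le> ((3 + 2 / \<alpha>) + (q + (p / (p - 1) / q) powr (-(1 - 1/p)))) * ((2 * (p / (p - 1))) powr p) powr (1/q)
          * Lnorm M p G"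
proof -
  define K0 where "K0 = (3 + 2 / \<alpha>) + (q + (p / (p - 1) / q) powr (-(1 - 1/p)))"
  define D where "D = (2 * (p / (p - 1))) powr p"
  define I where "I x = (\<Sum>n\<in>{1..N}. mf n x powr \<alpha> * mdiff M F G n x)" for x
  define nG where "nG = (\<integral>x. \<bar>G x\<bar> powr p \<partial>M) powr (1/p)"
  define Mf where "Mf x = Max ((\<lambda>k. real_cond_exp M (F k) (\<lambda>y. \<bar>G y\<bar>) x) ` {0..N})" for x
  have Gm[measurable]: "G \<in> borel_measurable M" using measM[OF GN] .
  have Gi: "integrable M G" using Lp_integrable[OF prob Gm _ Gp] par by simp
  have aG: "integrable M (\<lambda>y. \<bar>G y\<bar>)" using Gi by simp
  have K0: "0 \<le> K0" using par by (simp add: K0_def add_nonneg_nonneg)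
  have D0: "0 \<le> D" by (simp add: D_def)
  have nG0: "0 \<le> nG" by (simp add: nG_def)
  have intG: "(\<integral>x. \<bar>G x\<bar> powr p \<partial>M) = nG powr p"
  proof -
    have "0 \<le> (\<integral>x. \<bar>G x\<bar> powr p \<partial>M)" by simp
    then show ?thesis using par by (simp add: nG_def powr_powr)
  qed
  have Mfm[measurable]: "Mf \<in> borel_measurable M" unfolding Mf_def
    by (intro borel_measurable_Max) auto
  have Mf0: "0 \<le> Mf x" if "x \<in> space M" for x
  proof -
    have "0 \<le> real_cond_exp M (F 0) (\<lambda>y. \<bar>G y\<bar>) x"
      using cond_exp_formula[OF aG that, of 0] om_pos[OF that, of 0] by simp
    also have "\<dots> \<le> Mf x" unfolding Mf_def by (intro Max_ge) auto
    finally show ?thesis .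
  qed
  have doobI: "integrable M (\<lambda>x. Mf x powr p)" "(\<integral>x. Mf x powr p \<partial>M) \<le> D * nG powr p"
    using doob[OF Gm Gp par(3) GN] by (simp_all add: Mf_def D_def intG)
  have pt: "\<bar>I x\<bar> \<le> K0 * Mf x powr (p/q) * nG powr (1 - p/q)" if x: "x \<in> space M" for x
  proof -
    have avg: "real_cond_exp M (F k) G x = (\<integral>y. indicator (om k x) y * G y \<partial>M) / measure M (om k x)" for k
      by (rule cond_exp_formula[OF Gi x])
    have "\<bar>I x\<bar> \<le> (\<Sum>n\<in>{1..N}. \<bar>mf n x powr \<alpha> * mdiff M F G n x\<bar>)" unfolding I_def by (rule sum_abs)
    also have "\<dots> = (\<Sum>n\<in>{1..N}. mf n x powr \<alpha> * \<bar>(\<integral>y. indicator (om n x) y * G y \<partial>M) / measure M (om n x)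
            - (\<integral>y. indicator (om (n - 1) x) y * G y \<partial>M) / measure M (om (n - 1) x)\<bar>)"
      by (intro sum.cong refl) (simp add: abs_mult mdiff_def avg)
    also have "\<dots> \<le> K0 * Mf x powr (p/q) * nG powr (1 - p/q)"
      unfolding K0_def nG_def
    proof (rule chain_bound[OF prob Gm Gp])
      show "om k x \<in> sets M" for k using om_sets[OF x] .
      show "0 < measure M (om k x)" for k using om_pos[OF x] .
      show "om n x \<subseteq> om (n - 1) x" for n using om_refine[OF x, of "n - 1" n] by simp
      show "(\<integral>y. indicator (om k x) y * \<bar>G y\<bar> \<partial>M) / measure M (om k x) \<le> Mf x" if "k \<le> N" for k
      proof -
        have "(\<integral>y. indicator (om k x) y * \<bar>G y\<bar> \<partial>M) / measure M (om k x) = real_cond_exp M (F k) (\<lambda>y. \<bar>G y\<bar>) x"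
          by (rule cond_exp_formula[OF aG x, symmetric])
        also have "\<dots> \<le> Mf x" unfolding Mf_def using that by (intro Max_ge) auto
        finally show ?thesis .
      qed
      show "0 \<le> mf n x \<and> mf n x \<le> measure M (om n x)" if "1 \<le> n" for n using mfb[OF x that] .
    qed (use par in auto)
    finally show ?thesis .
  qed
  have Im[measurable]: "I \<in> borel_measurable M" unfolding I_def mdiff_def by measurable
  have ptq: "\<bar>I x\<bar> powr q \<le> K0 powr q * nG powr (q - p) * Mf x powr p" if x: "x \<in> space M" for x
  proof -
    have "\<bar>I x\<bar> powr q \<le> (K0 * Mf x powr (p/q) * nG powr (1 - p/q)) powr q"
      using pt[OF x] par by (intro powr_mono2) auto
    also have "\<dots> = K0 powr q * (Mf x powr (p/q)) powr q * (nG powr (1 - p/q)) powr q"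
      using K0 Mf0[OF x] nG0 by (simp add: powr_mult)
    also have "(Mf x powr (p/q)) powr q = Mf x powr p" using par by (simp add: powr_powr)
    also have "(nG powr (1 - p/q)) powr q = nG powr (q - p)" using par by (simp add: powr_powr algebra_simps)
    finally show ?thesis by (simp add: mult_ac)
  qed
  have Iint: "integrable M (\<lambda>x. \<bar>I x\<bar> powr q)"
  proof (rule Bochner_Integration.integrable_bound[where f="\<lambda>x. K0 powr q * nG powr (q - p) * Mf x powr p"])
    show "integrable M (\<lambda>x. K0 powr q * nG powr (q - p) * Mf x powr p)" using doobI(1) by simp
    show "AE x in M. norm (\<bar>I x\<bar> powr q) \<le> norm (K0 powr q * nG powr (q - p) * Mf x powr p)"
      using ptq by (intro AE_I2) (auto intro: order_trans[OF _ abs_ge_self])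
  qed simp
  have "(\<integral>x. \<bar>I x\<bar> powr q \<partial>M) \<le> (\<integral>x. K0 powr q * nG powr (q - p) * Mf x powr p \<partial>M)"
    using ptq Iint doobI(1) by (intro integral_mono) auto
  also have "\<dots> = K0 powr q * nG powr (q - p) * (\<integral>x. Mf x powr p \<partial>M)" by simp
  also have "\<dots> \<le> K0 powr q * nG powr (q - p) * (D * nG powr p)"
    using doobI(2) by (intro mult_left_mono) auto
  also have "\<dots> = K0 powr q * D * nG powr q"
    by (simp add: mult_ac powr_add[symmetric])
  finally have iq: "(\<integral>x. \<bar>I x\<bar> powr q \<partial>M) \<le> K0 powr q * D * nG powr q" .
  have "Lnorm M q I \<le> (K0 powr q * D * nG powr q) powr (1/q)"
    unfolding Lnorm_def using iq par by (intro powr_mono2) auto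
  also have "\<dots> = K0 * D powr (1/q) * nG"
    using K0 D0 nG0 par by (simp add: powr_mult powr_powr)
  finally have "Lnorm M q I \<le> K0 * D powr (1/q) * Lnorm M p G" by (simp add: Lnorm_def nG_def)
  moreover have Ieq: "I = (\<lambda>x. \<Sum>n\<in>{1..N}. mf n x powr \<alpha> * mdiff M F G n x)" by (simp add: I_def fun_eq_iff)
  ultimately have L': "Lnorm M q (\<lambda>x. \<Sum>n\<in>{1..N}. mf n x powr \<alpha> * mdiff M F G n x) \<le> K0 * D powr (1/q) * Lnorm M p G"
    by simp
  have Iint': "integrable M (\<lambda>x. \<bar>\<Sum>n\<in>{1..N}. mf n x powr \<alpha> * mdiff M F G n x\<bar> powr q)"
    using Iint unfolding I_def .
  show ?thesis by (intro conjI Iint' L'[unfolded K0_def D_def])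
qed

end

theorem theorem1:
  fixes M :: "'a measure" and F :: "nat \<Rightarrow> 'a measure" and A :: "nat \<Rightarrow> 'a set set"
    and \<alpha> p q :: real
  assumes "prob_space M"
    and "atomless M"
    and "\<And>n. subalgebra M (F n)"
    and "\<And>n m. n \<le> m \<Longrightarrow> sets (F n) \<subseteq> sets (F m)"
    and "\<And>n. countable (A n)"
    and "\<And>n. disjoint (A n)"
    and "\<And>n. \<Union>(A n) = space M"
    and "\<And>n w. w \<in> A n \<Longrightarrow> is_atom M (F n) w"
    and "\<And>n. sets (F n) = sigma_sets (space M) (A n)"
    and "sets M = sigma_sets (space M) (\<Union>n. sets (F n))"
    and "0 < \<alpha>" and "\<alpha> < 1" and "1 < p" and "p < q" and "1 / p - 1 / q = \<alpha>"
  shows "\<exists>C. \<forall>N G. G \<in> borel_measurable (F N) \<and> integrable M (\<lambda>x. \<bar>G x\<bar> powr p) \<longrightarrow>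
           integrable M (\<lambda>x. \<bar>I_tilde M F A \<alpha> N G x\<bar> powr q) \<and>
           Lnorm M q (I_tilde M F A \<alpha> N G) \<le> C * Lnorm M p G \<and>
           integrable M (\<lambda>x. \<bar>I_A M F A \<alpha> N G x\<bar> powr q) \<and>
           Lnorm M q (I_A M F A \<alpha> N G) \<le> C * Lnorm M p G"
proof -
  interpret atomfilt M F A
    by (rule atomfilt.intro[OF assms(1) assms(3) assms(4) assms(5) assms(6) assms(7) assms(8) assms(9)])
  have par: "0 < \<alpha>" "\<alpha> < 1" "1 < p" "p < q" "1/p - 1/q = \<alpha>" using assms(11-15) by auto
  define C where "C = ((3 + 2 / \<alpha>) + (q + (p / (p - 1) / q) powr (-(1 - 1/p)))) * ((2 * (p / (p - 1))) powr p) powr (1/q)"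
  show ?thesis
  proof (intro exI[of _ C] allI impI)
    fix N G assume NG: "G \<in> borel_measurable (F N) \<and> integrable M (\<lambda>x. \<bar>G x\<bar> powr p)"
    have T: "integrable M (\<lambda>x. \<bar>\<Sum>n\<in>{1..N}. btilde M A n x powr \<alpha> * mdiff M F G n x\<bar> powr q)
      \<and> Lnorm M q (\<lambda>x. \<Sum>n\<in>{1..N}. btilde M A n x powr \<alpha> * mdiff M F G n x) \<le> C * Lnorm M p G"
      unfolding C_def
      by (rule op_bound[OF par conjunct1[OF NG] conjunct2[OF NG] btilde_meas]) (simp add: btilde_bounds)
    have B: "integrable M (\<lambda>x. \<bar>\<Sum>n\<in>{1..N}. bfun M A n x powr \<alpha> * mdiff M F G n x\<bar> powr q)
      \<and> Lnorm M q (\<lambda>x. \<Sum>n\<in>{1..N}. bfun M A n x powr \<alpha> * mdiff M F G n x) \<le> C * Lnorm M p G"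
      unfolding C_def
      by (rule op_bound[OF par conjunct1[OF NG] conjunct2[OF NG] bfun_meas]) (simp add: bfun_eq)
    have e1: "I_tilde M F A \<alpha> N G = (\<lambda>x. \<Sum>n\<in>{1..N}. btilde M A n x powr \<alpha> * mdiff M F G n x)"
      by (simp add: I_tilde_def[abs_def])
    have e2: "I_A M F A \<alpha> N G = (\<lambda>x. \<Sum>n\<in>{1..N}. bfun M A n x powr \<alpha> * mdiff M F G n x)"
      by (simp add: I_A_def[abs_def])
    show "integrable M (\<lambda>x. \<bar>I_tilde M F A \<alpha> N G x\<bar> powr q) \<and>
           Lnorm M q (I_tilde M F A \<alpha> N G) \<le> C * Lnorm M p G \<and>
           integrable M (\<lambda>x. \<bar>I_A M F A \<alpha> N G x\<bar> powr q) \<and>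
           Lnorm M q (I_A M F A \<alpha> N G) \<le> C * Lnorm M p G"
      using T B unfolding e1 e2 by simp
  qed
qed

end
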